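(* Let $\lambda>0$ and $0\le\alpha<1$, and let $X_1,\dots,X_n$ be i.i.d. random variables with the generalized Poisson distribution $$\Pr\{X=x\}=\frac{\lambda(\lambda+x\alpha)^{x-1}e^{-\lambda-x\alpha}}{x!},\qquad x=0,1,2,\dots,$$ and $\overline{X}_n=\frac1n\sum_{i=1}^nX_i$. Then $$\Pr\{\overline{X}_n\le z\}\le\frac{\lambda}{(1-\alpha)(\lambda+z\alpha)}\Big[\Big(\frac\lambda z+\alpha\Big)^z\frac{e^{(1-\alpha)z}}{e^\lambda}\Big]^n\quad\text{if }0<z\le\frac{\lambda}{1-\alpha},$$ $$\Pr\{\overline{X}_n\ge z\}\le\frac{\lambda}{(1-\alpha)(\lambda+z\alpha)}\Big[\Big(\frac\lambda z+\alpha\Big)^z\frac{e^{(1-\alpha)z}}{e^\lambda}\Big]^n\quad\text{if }z\ge\frac{\lambda}{1-\alpha}.$$ Moreover, with $\nu=\frac12\big[(1-\alpha)z+\sqrt{(1-\alpha)^2z^2+4z\alpha/n}\big]$, $$\Pr\{\overline{X}_n\le z\}\le\frac{\lambda(\nu+z\alpha)}{\nu(\lambda+z\alpha)}\Big[\Big(\frac{\lambda+z\alpha}{\nu+z\alpha}\Big)^z\frac{e^\nu}{e^\lambda}\Big]^n\quad\text{if }0<z\le\frac{\lambda}{1-\alpha+\frac{\alpha}{n\lambda}},$$ $$\Pr\{\overline{X}_n\ge z\}\le\frac{\lambda(\nu+z\alpha)}{\nu(\lambda+z\alpha)}\Big[\Big(\frac{\lambda+z\alpha}{\nu+z\alpha}\Big)^z\frac{e^\nu}{e^\lambda}\Big]^n\quad\text{if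 }z\ge\frac{\lambda}{1-\alpha+\frac{\alpha}{n\lambda}}.$$ Furthermore, if $\alpha=0$, then with $\varDelta=\min\big\{\frac12,\frac{\mathscr{C}}{\sqrt n}(3+\frac1z)^{3/4}\big\}$, where $\mathscr{C}$ is the Berry–Esseen constant, $$\Pr\{\overline{X}_n\ge z\}\le\Big(\frac12+\varDelta\Big)\Big(\frac{\lambda^ze^z}{z^ze^\lambda}\Big)^n\ \text{ for }z\ge\lambda,\qquad \Pr\{\overline{X}_n\le z\}\le\Big(\frac12+\varDelta\Big)\Big(\frac{\lambda^ze^z}{z^ze^\lambda}\Big)^n\ \text{ for }0<z\le\lambda.$$
   Context: The Berry–Esseen constant $\mathscr{C}$ is a positive absolute constant such that for every random variable $Y$ with $\mathbb{E}[Y]=0$, $\mathbb{E}[Y^2]>0$, $\mathbb{E}[|Y|^3]<\infty$, every $n$ and every $y\in\mathbb{R}$, $|F_n(y)-\Phi(y)|\le\frac{\mathscr{C}}{\sqrt n}\frac{\mathbb{E}[|Y|^3]}{\mathbb{E}^{3/2}[Y^2]}$, where $F_n$ is the cdf of $\sum_{i=1}^nY_i/\sqrt{n\mathbb{E}[Y^2]}$ for i.i.d. copies $Y_i$ of $Y$ and $\Phi$ is the standard normal cdf. *)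

theory Defs
  imports "HOL-Probability.Probability"
begin

definition gen_poisson_pmf :: "real \<Rightarrow> real \<Rightarrow> nat \<Rightarrow> real" where
  "gen_poisson_pmf lam alpha x =
     lam * (lam + real x * alpha) powr (real x - 1) * exp (- lam - real x * alpha) / fact x"

definition berry_esseen_const :: "real \<Rightarrow> bool" where
  "berry_esseen_const C \<longleftrightarrow> C > 0 \<and>
    (\<forall>\<mu> :: real measure. prob_space \<mu> \<and> sets \<mu> = sets borel \<and>
       integrable \<mu> (\<lambda>x. \<bar>x\<bar> ^ 3) \<and> (\<integral>x. x \<partial>\<mu>) = 0 \<and> (\<integral>x. x ^ 2 \<partial>\<mu>) > 0 \<longrightarrow>
       (\<forall>n::nat. n \<ge> 1 \<longrightarrow> (\<forall>y::real.
          \<bar>measure (PiM {..<n} (\<lambda>_. \<mu>))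
              {\<omega> \<in> space (PiM {..<n} (\<lambda>_. \<mu>)).
                 (\<Sum>i<n. \<omega> i) / sqrt (real n * (\<integral>x. x ^ 2 \<partial>\<mu>)) \<le> y}
           - measure (density lborel std_normal_density) {..y}\<bar>
          \<le> C / sqrt (real n) * (\<integral>x. \<bar>x\<bar> ^ 3 \<partial>\<mu>) / (\<integral>x. x ^ 2 \<partial>\<mu>) powr (3/2))))"

end

theory Submission
  imports Defs
begin

definition abel :: "real \<Rightarrow> real \<Rightarrow> nat \<Rightarrow> real" where
  "abel a t x = (if x = 0 then 1 else t * (t + real x * a) ^ (x - 1) / fact x)"

definition abelD :: "real \<Rightarrow> real \<Rightarrow> nat \<Rightarrow> real" where
  "abelD a t x = (if x = 0 then 0 else abel a (t + a) (x - 1))"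

lemma abel_deriv: "((\<lambda>t. abel a t x) has_field_derivative abelD a t x) (at t)"
proof (cases x)
  case 0 then show ?thesis by (simp add: abel_def abelD_def)
next
  case (Suc k)
  note xk = Suc
  show ?thesis
  proof (cases k)
    case 0 then show ?thesis using xk by (simp add: abel_def abelD_def)
  next
    case (Suc j)
    have d: "((\<lambda>t. t * (t + real x * a) ^ (Suc j) / fact x) has_field_derivative
      (((t + real x * a) ^ Suc j + t * (real (Suc j) * (t + real x * a) ^ j)) / fact x)) (at t)"
      by (auto intro!: derivative_eq_intros) (cases j; simp add: algebra_simps)
    have "((t + real x * a) ^ Suc j + t * (real (Suc j) * (t + real x * a) ^ j)) / fact x
        = abel a (t + a) (x - 1)"
    proof -
      have e: "t + a + real (Suc j) * a = t + real x * a" using xk Suc by (simp add: algebra_simps)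
      have f: "(fact x :: real) = real (Suc (Suc j)) * fact (Suc j)" using xk Suc by simp
      have g: "((t + real x * a) ^ Suc j + t * (real (Suc j) * (t + real x * a) ^ j))
          = real (Suc (Suc j)) * ((t + a) * (t + real x * a) ^ j)"
        using xk Suc by (simp add: algebra_simps)
      have "abel a (t + a) (Suc j) = (t + a) * (t + real x * a) ^ j / fact (Suc j)"
        unfolding abel_def e[symmetric] by simp
      then show ?thesis using xk Suc f g by simp
    qed
    moreover have "(\<lambda>t. abel a t x) = (\<lambda>t. t * (t + real x * a) ^ (Suc j) / fact x)"
      using xk Suc by (simp add: abel_def fun_eq_iff)
    ultimately show ?thesis using d xk by (simp add: abelD_def)
  qed
qed

lemma abel_zero: "x > 0 \<Longrightarrow> abel a 0 x = 0" by (simp add: abel_def)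

lemma abel_conv: "(\<Sum>k\<le>x. abel a t k * abel a s (x - k)) = abel a (t + s) x"
proof (induction x arbitrary: t s)
  case 0 then show ?case by (simp add: abel_def)
next
  case (Suc x)
  define f where "f t = (\<Sum>k\<le>Suc x. abel a t k * abel a s (Suc x - k)) - abel a (t + s) (Suc x)" for t
  have "DERIV f t :> 0" for t
  proof -
    have "DERIV f t :> (\<Sum>k\<le>Suc x. abelD a t k * abel a s (Suc x - k)) - abelD a (t + s) (Suc x)"
      unfolding f_def
    proof (rule DERIV_diff)
      show "DERIV (\<lambda>t. \<Sum>k\<le>Suc x. abel a t k * abel a s (Suc x - k)) t :> (\<Sum>k\<le>Suc x. abelD a t k * abel a s (Suc x - k))"
        by (rule DERIV_sum) (rule DERIV_cmult_right, rule abel_deriv)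
      show "DERIV (\<lambda>t. abel a (t + s) (Suc x)) t :> abelD a (t + s) (Suc x)"
        using DERIV_shift[of "\<lambda>t. abel a t (Suc x)" "abelD a (t + s) (Suc x)" t s] abel_deriv by simp
    qed
    moreover have "(\<Sum>k\<le>Suc x. abelD a t k * abel a s (Suc x - k)) = abelD a (t + s) (Suc x)"
      apply (simp only: sum.atMost_Suc_shift)
      by (simp add: abelD_def Suc.IH add_ac)
    ultimately show ?thesis by simp
  qed
  then have "f t = f 0" by (intro DERIV_isconst_all) auto
  moreover have "f 0 = 0"
    unfolding f_def by (simp only: sum.atMost_Suc_shift) (simp add: abel_zero, simp add: abel_def)
  ultimately show ?case by (simp add: f_def)
qed

lemma sum_dist:
  fixes X :: "nat \<Rightarrow> 'a \<Rightarrow> nat"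
  assumes P: "prob_space M"
    and meas: "\<And>i. i < n \<Longrightarrow> X i \<in> measurable M (count_space UNIV)"
    and ind: "prob_space.indep_vars M (\<lambda>_. count_space UNIV) X {..<n}"
    and dist: "\<And>i x. i < n \<Longrightarrow> measure M {\<omega>\<in>space M. X i \<omega> = x} = f x"
    and p1: "\<And>x. p (Suc 0) x = f x"
    and pS: "\<And>m x. p (Suc m) x = (\<Sum>k\<le>x. p m k * f (x - k))"
    and m: "Suc m \<le> n"
  shows "measure M {\<omega>\<in>space M. (\<Sum>i<Suc m. X i \<omega>) = x} = p (Suc m) x"
  using m
proof (induction m arbitrary: x)
  case 0 then show ?case using dist[of 0 x] p1 by simp
next
  case (Suc m)
  interpret prob_space M by (rule P)
  define S where "S \<omega> = (\<Sum>i<Suc m. X i \<omega>)" for \<omega>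
  define Y where "Y = X (Suc m)"
  have IH: "measure M {\<omega>\<in>space M. S \<omega> = k} = p (Suc m) k" for k
    using Suc by (simp add: S_def)
  have Yd: "measure M {\<omega>\<in>space M. Y \<omega> = k} = f k" for k
    using Suc dist by (simp add: Y_def)
  have indr: "indep_vars (\<lambda>_. borel) (\<lambda>i \<omega>. real (X i \<omega>)) {..<n}"
    by (rule indep_vars_compose2[OF ind]) simp
  have indr2: "indep_vars (\<lambda>_. borel) (\<lambda>i \<omega>. real (X i \<omega>)) (insert (Suc m) {..<Suc m})"
    by (rule indep_vars_subset[OF indr]) (use Suc.prems in auto)
  have iv: "indep_var borel (\<lambda>\<omega>. real (Y \<omega>)) borel (\<lambda>\<omega>. \<Sum>i<Suc m. real (X i \<omega>))"
    using indep_vars_sum[OF _ _ indr2] by (simp add: Y_def)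
  have measX: "(\<lambda>\<omega>. real (X i \<omega>)) \<in> borel_measurable M" if "i \<le> Suc m" for i
  proof -
    have "i < n" using that Suc.prems by simp
    have r: "real \<in> measurable (count_space UNIV) borel" by (simp add: measurable_count_space_eq1)
    from \<open>i < n\<close> show ?thesis by (rule measurable_compose[OF meas r])
  qed
  have mS: "(\<lambda>\<omega>. \<Sum>i<Suc m. real (X i \<omega>)) \<in> borel_measurable M"
    by (rule borel_measurable_sum, rule measX) simp
  have mY: "(\<lambda>\<omega>. real (Y \<omega>)) \<in> borel_measurable M"
    unfolding Y_def by (rule measX) simp
  have eS: "{\<omega>\<in>space M. S \<omega> = k} = (\<lambda>\<omega>. \<Sum>i<Suc m. real (X i \<omega>)) -` {real k} \<inter> space M" for k
    by (auto simp: S_def simp flip: of_nat_sum)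
  have eY: "{\<omega>\<in>space M. Y \<omega> = k} = (\<lambda>\<omega>. real (Y \<omega>)) -` {real k} \<inter> space M" for k
    by auto
  have evS: "{\<omega>\<in>space M. S \<omega> = k} \<in> events" for k
    unfolding eS using mS by measurable
  have evY: "{\<omega>\<in>space M. Y \<omega> = k} \<in> events" for k
    unfolding eY using mY by measurable
  have prodk: "prob ({\<omega>\<in>space M. S \<omega> = k} \<inter> {\<omega>\<in>space M. Y \<omega> = j}) = p (Suc m) k * f j" for k j
  proof -
    have "prob ((\<lambda>x. (real (Y x), \<Sum>i<Suc m. real (X i x))) -` ({real j} \<times> {real k}) \<inter> space M) =
      prob ((\<lambda>\<omega>. real (Y \<omega>)) -` {real j} \<inter> space M) * prob ((\<lambda>\<omega>. \<Sum>i<Suc m. real (X i \<omega>)) -` {real k} \<inter> space M)"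
      by (rule indep_varD[OF iv]) auto
    moreover have "(\<lambda>x. (real (Y x), \<Sum>i<Suc m. real (X i x))) -` ({real j} \<times> {real k}) \<inter> space M
       = {\<omega>\<in>space M. S \<omega> = k} \<inter> {\<omega>\<in>space M. Y \<omega> = j}"
      by (auto simp: S_def simp flip: of_nat_sum)
    ultimately show ?thesis by (simp only: IH Yd eS[symmetric] eY[symmetric] mult.commute)
  qed
  have "{\<omega>\<in>space M. (\<Sum>i<Suc (Suc m). X i \<omega>) = x} =
     (\<Union>k\<in>{..x}. {\<omega>\<in>space M. S \<omega> = k} \<inter> {\<omega>\<in>space M. Y \<omega> = x - k})"
    by (auto simp: S_def Y_def)
  then have "prob {\<omega>\<in>space M. (\<Sum>i<Suc (Suc m). X i \<omega>) = x} =
     (\<Sum>k\<le>x. prob ({\<omega>\<in>space M. S \<omega> = k} \<inter> {\<omega>\<in>space M. Y \<omega> = x - k}))"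
    by (simp only:) (rule finite_measure_finite_Union, simp, use evS evY in blast, simp add: disjoint_family_on_def, blast)
  also have "\<dots> = p (Suc (Suc m)) x" using prodk pS by simp
  finally show ?case .
qed

lemma gp_abel:
  assumes "t > 0" "a \<ge> 0"
  shows "gen_poisson_pmf t a x = abel a t x * exp (- t - real x * a)"
proof (cases x)
  case 0 then show ?thesis using assms by (simp add: gen_poisson_pmf_def abel_def powr_minus divide_simps)
next
  case (Suc k)
  have pos: "t + real x * a > 0" using assms by (simp add: add_pos_nonneg)
  have "(t + real x * a) powr (real x - 1) = (t + real x * a) ^ k"
    using pos Suc by (simp add: powr_realpow)
  then show ?thesis using Suc by (simp add: gen_poisson_pmf_def abel_def)
qed

lemma abel_nonneg: "t \<ge> 0 \<Longrightarrow> a \<ge> 0 \<Longrightarrow> abel a t x \<ge> 0"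
  by (simp add: abel_def)

lemma abel_mono: "0 \<le> t \<Longrightarrow> t \<le> t' \<Longrightarrow> a \<ge> 0 \<Longrightarrow> abel a t x \<le> abel a t' x"
  unfolding abel_def
  by (auto intro!: divide_right_mono mult_mono power_mono)

lemma gp_nonneg: "t > 0 \<Longrightarrow> a \<ge> 0 \<Longrightarrow> gen_poisson_pmf t a x \<ge> 0"
  by (simp add: gp_abel abel_nonneg)

lemma gp_conv:
  assumes "t > 0" "s > 0" "a \<ge> 0"
  shows "(\<Sum>k\<le>x. gen_poisson_pmf t a k * gen_poisson_pmf s a (x - k)) = gen_poisson_pmf (t + s) a x"
proof -
  have "(\<Sum>k\<le>x. gen_poisson_pmf t a k * gen_poisson_pmf s a (x - k))
      = (\<Sum>k\<le>x. abel a t k * abel a s (x - k) * exp (- (t + s) - real x * a))"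
  proof (rule sum.cong[OF refl])
    fix k assume "k \<in> {..x}"
    then have "real (x - k) = real x - real k" by simp
    then have "(- t - real k * a) + (- s - real (x - k) * a) = - (t + s) - real x * a"
      by (simp add: algebra_simps del: of_nat_diff) (simp add: distrib_left[symmetric])
    then have "exp (- t - real k * a) * exp (- s - real (x - k) * a) = exp (- (t + s) - real x * a)"
      by (simp only: mult_exp_exp)
    then show "gen_poisson_pmf t a k * gen_poisson_pmf s a (x - k) = abel a t k * abel a s (x - k) * exp (- (t + s) - real x * a)"
      using assms by (simp add: gp_abel algebra_simps del: of_nat_diff)
  qed
  also have "\<dots> = abel a (t + s) x * exp (- (t + s) - real x * a)"
    by (simp add: sum_distrib_right[symmetric] abel_conv)
  finally show ?thesis using assms by (simp add: gp_abel)
qed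

lemma gp_le:
  assumes "0 < t" "t \<le> t'" "a \<ge> 0"
  shows "gen_poisson_pmf t a x \<le> gen_poisson_pmf t' a x * exp (t' - t)"
proof -
  have "exp (- t - real x * a) = exp (- t' - real x * a) * exp (t' - t)"
    by (simp add: mult_exp_exp)
  then show ?thesis using assms
    by (simp add: gp_abel mult.assoc[symmetric] abel_nonneg abel_mono mult_right_mono)
qed

lemma gp_summable_le:
  assumes "0 < t" "t \<le> t'" "a \<ge> 0" "summable (gen_poisson_pmf t' a)"
  shows "summable (gen_poisson_pmf t a)"
  by (rule summable_comparison_test'[where g="\<lambda>x. gen_poisson_pmf t' a x * exp (t' - t)"])
     (use assms gp_le gp_nonneg summable_mult2 in auto)

lemma gp_summable_add:
  assumes "0 < t" "0 < s" "a \<ge> 0" "summable (gen_poisson_pmf t a)" "summable (gen_poisson_pmf s a)"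
  shows "summable (gen_poisson_pmf (t + s) a)"
    "suminf (gen_poisson_pmf (t + s) a) = suminf (gen_poisson_pmf t a) * suminf (gen_poisson_pmf s a)"
proof -
  have n1: "summable (\<lambda>k. norm (gen_poisson_pmf t a k))" using assms gp_nonneg by simp
  have n2: "summable (\<lambda>k. norm (gen_poisson_pmf s a k))" using assms gp_nonneg by simp
  show "summable (gen_poisson_pmf (t + s) a)"
    using summable_Cauchy_product[OF n1 n2] by (simp add: gp_conv assms)
  show "suminf (gen_poisson_pmf (t + s) a) = suminf (gen_poisson_pmf t a) * suminf (gen_poisson_pmf s a)"
    using Cauchy_product[OF n1 n2] by (simp add: gp_conv assms)
qed

lemma gp_mult:
  assumes "0 < t" "a \<ge> 0" "summable (gen_poisson_pmf t a)"
  shows "summable (gen_poisson_pmf (real (Suc k) * t) a) \<and>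
         suminf (gen_poisson_pmf (real (Suc k) * t) a) = suminf (gen_poisson_pmf t a) ^ Suc k"
proof (induction k)
  case 0 then show ?case using assms by simp
next
  case (Suc k)
  have e: "real (Suc (Suc k)) * t = real (Suc k) * t + t" by (simp add: algebra_simps)
  have p: "real (Suc k) * t > 0" using assms by simp
  show ?case unfolding e using gp_summable_add[OF p assms(1,2)] Suc assms by simp
qed

lemma gp_norm_le:
  assumes lam: "lam > 0" and a: "a \<ge> 0" and s1: "gen_poisson_pmf lam a sums 1" and t: "t > 0"
  shows "summable (gen_poisson_pmf t a) \<and> suminf (gen_poisson_pmf t a) \<le> 1"
proof -
  have slam: "summable (gen_poisson_pmf lam a)" using s1 by (simp add: sums_iff)
  have lam1: "suminf (gen_poisson_pmf lam a) = 1" using s1 by (simp add: sums_iff)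
  have sm: "summable (gen_poisson_pmf (real (Suc k) * lam) a)"
       "suminf (gen_poisson_pmf (real (Suc k) * lam) a) = 1" for k
    using gp_mult[OF lam a slam, of k] lam1 by auto
  obtain k0 where k0: "t \<le> real (Suc k0) * lam"
  proof -
    obtain k :: nat where "t / lam \<le> real k" using real_arch_simple by blast
    then have "t \<le> real (Suc k) * lam" using lam by (simp add: field_simps)
    then show ?thesis using that by blast
  qed
  have st: "summable (gen_poisson_pmf t a)"
    by (rule gp_summable_le[OF t k0 a sm(1)])
  define G where "G = suminf (gen_poisson_pmf t a)"
  have G0: "G \<ge> 0" unfolding G_def by (intro suminf_nonneg st gp_nonneg t a)
  have bound: "G ^ Suc k \<le> exp lam" for k
  proof -
    define m where "m = nat \<lceil>real (Suc k) * t / lam\<rceil>"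
    have kt: "real (Suc k) * t > 0" using t by simp
    have m1: "real (Suc k) * t \<le> real m * lam" and m2: "real m * lam \<le> real (Suc k) * t + lam"
    proof -
      have "real m = real_of_int \<lceil>real (Suc k) * t / lam\<rceil>" unfolding m_def
        using kt lam by (simp add: zero_le_divide_iff)
      moreover have "real (Suc k) * t / lam \<le> real_of_int \<lceil>real (Suc k) * t / lam\<rceil>"
          "real_of_int \<lceil>real (Suc k) * t / lam\<rceil> < real (Suc k) * t / lam + 1" by linarith+
      ultimately show "real (Suc k) * t \<le> real m * lam" "real m * lam \<le> real (Suc k) * t + lam"
        using lam by (simp_all only: pos_divide_le_eq pos_less_divide_eq divide_less_eq, simp_all add: field_simps)
    qed
    have "m > 0" using m1 kt lam by (cases m) auto
    then obtain j where mj: "m = Suc j" by (cases m) auto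
    have smj: "summable (gen_poisson_pmf (real m * lam) a)" "suminf (gen_poisson_pmf (real m * lam) a) = 1"
      using sm[of j] mj by auto
    have "G ^ Suc k = suminf (gen_poisson_pmf (real (Suc k) * t) a)"
      using gp_mult[OF t a st, of k] by (simp add: G_def)
    also have "\<dots> \<le> suminf (\<lambda>x. gen_poisson_pmf (real m * lam) a x * exp (real m * lam - real (Suc k) * t))"
      by (rule suminf_le) (use gp_le[OF kt m1 a] smj gp_mult[OF t a st, of k] summable_mult2 in auto)
    also have "\<dots> = exp (real m * lam - real (Suc k) * t)"
      using smj by (simp add: suminf_mult2[symmetric])
    also have "\<dots> \<le> exp lam" using m2 by simp
    finally show ?thesis .
  qed
  have "G \<le> 1"
  proof (rule ccontr)
    assume "\<not> G \<le> 1"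
    then have g: "G - 1 > 0" by simp
    obtain k :: nat where k: "exp lam / (G - 1) < real k" using reals_Archimedean2 by blast
    have "1 + real (Suc k) * (G - 1) \<le> (1 + (G - 1)) ^ Suc k"
      by (rule Bernoulli_inequality) (use g in simp)
    then have "1 + real (Suc k) * (G - 1) \<le> exp lam" using bound[of k] by simp
    moreover have "exp lam < real k * (G - 1)" using k g by (simp add: field_simps)
    ultimately show False using g by (simp add: algebra_simps)
  qed
  then show ?thesis using st G_def by simp
qed

definition Rr :: "real \<Rightarrow> real \<Rightarrow> real \<Rightarrow> real \<Rightarrow> real" where
  "Rr L th a t = (L / th) * ((L + t * a) / (th + t * a)) powr (t - 1) * exp (th - L)"

definition gfun :: "real \<Rightarrow> real \<Rightarrow> real \<Rightarrow> real \<Rightarrow> real" where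
  "gfun L th a t = (t - 1) * (ln (L + t * a) - ln (th + t * a))"

definition gder :: "real \<Rightarrow> real \<Rightarrow> real \<Rightarrow> real \<Rightarrow> real" where
  "gder L th a t = (ln (L + t * a) - ln (th + t * a)) + (t - 1) * (a / (L + t * a) - a / (th + t * a))"

lemma gp_ratio:
  assumes "L > 0" "th > 0" "a \<ge> 0"
  shows "gen_poisson_pmf L a j = Rr L th a (real j) * gen_poisson_pmf th a j"
proof -
  have p: "th + real j * a > 0" using assms by (simp add: add_pos_nonneg)
  have e: "exp (th - L) * exp (- th - real j * a) = exp (- L - real j * a)"
    by (simp add: mult_exp_exp)
  have "(th + real j * a) powr (real j - 1) > 0" using p by simp
  then show ?thesis using assms e
    unfolding Rr_def gen_poisson_pmf_def powr_divide
    by (simp add: field_simps)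
qed

lemma Rr_exp:
  assumes "L > 0" "th > 0" "a \<ge> 0" "t \<ge> 0"
  shows "Rr L th a t = (L / th) * exp (th - L) * exp (gfun L th a t)"
proof -
  have "L + t * a > 0" "th + t * a > 0" using assms by (simp_all add: add_pos_nonneg)
  then show ?thesis
    unfolding Rr_def gfun_def powr_def by (simp add: ln_div)
qed

lemma gfun_deriv:
  assumes "L > 0" "th > 0" "a \<ge> 0" "t \<ge> 0"
  shows "DERIV (gfun L th a) t :> gder L th a t"
proof -
  have uv: "L + t * a > 0" "th + t * a > 0" using assms by (simp_all add: add_pos_nonneg)
  show ?thesis unfolding gfun_def[abs_def] gder_def
    by (rule derivative_eq_intros refl | simp add: uv)+
qed

lemma gfun_cont:
  assumes "L > 0" "th > 0" "a \<ge> 0" "0 \<le> s"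
  shows "continuous_on {s..t} (gfun L th a)"
  using assms by (intro continuous_at_imp_continuous_on ballI DERIV_continuous[OF gfun_deriv]) auto

lemma gder_nonneg:
  assumes "L > 0" "th > 0" "a \<ge> 0" "t \<ge> 0" "th \<le> L"
  shows "gder L th a t \<ge> 0"
proof -
  have u: "L + t * a > 0" and v: "th + t * a > 0" using assms by (simp_all add: add_pos_nonneg)
  have "ln ((th + t * a) / (L + t * a)) \<le> (th + t * a) / (L + t * a) - 1"
    using u v by (intro ln_le_minus_one) simp
  then have D: "ln (L + t * a) - ln (th + t * a) \<ge> (L - th) / (L + t * a)"
    using u v by (simp add: ln_div field_simps)
  have "(L - th) / (L + t * a) + (t - 1) * (a / (L + t * a) - a / (th + t * a))
      = (L - th) * (th + a) / ((L + t * a) * (th + t * a))"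
    using u v by (simp add: divide_simps) (simp add: algebra_simps)
  moreover have "(L - th) * (th + a) / ((L + t * a) * (th + t * a)) \<ge> 0"
    using u v assms by (intro divide_nonneg_pos mult_nonneg_nonneg) auto
  ultimately show ?thesis using D unfolding gder_def by linarith
qed

lemma gder_nonpos:
  assumes "L > 0" "th > 0" "a \<ge> 0" "t \<ge> 0" "L \<le> th"
  shows "gder L th a t \<le> 0"
proof -
  have u: "L + t * a > 0" and v: "th + t * a > 0" using assms by (simp_all add: add_pos_nonneg)
  have "ln ((L + t * a) / (th + t * a)) \<le> (L + t * a) / (th + t * a) - 1"
    using u v by (intro ln_le_minus_one) simp
  then have D: "ln (L + t * a) - ln (th + t * a) \<le> (L - th) / (th + t * a)"
    using u v by (simp add: ln_div field_simps)
  have "(L - th) / (th + t * a) + (t - 1) * (a / (L + t * a) - a / (th + t * a))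
      = (L - th) * (L + a) / ((L + t * a) * (th + t * a))"
    using u v by (simp add: divide_simps) (simp add: algebra_simps)
  moreover have "(L - th) * (L + a) / ((L + t * a) * (th + t * a)) \<le> 0"
    using u v assms by (intro divide_nonpos_pos mult_nonpos_nonneg) auto
  ultimately show ?thesis using D unfolding gder_def by linarith
qed

lemma Rr_mono_up:
  assumes "L > 0" "th > 0" "a \<ge> 0" "0 \<le> s" "s \<le> t" "th \<le> L"
  shows "Rr L th a s \<le> Rr L th a t"
proof -
  have "gfun L th a s \<le> gfun L th a t"
  proof (rule DERIV_nonneg_imp_increasing_open[OF assms(5)])
    fix x assume "s < x" "x < t"
    then show "\<exists>y. DERIV (gfun L th a) x :> y \<and> y \<ge> 0"
      using gfun_deriv[of L th a x] gder_nonneg[of L th a x] assms by auto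
  qed (rule gfun_cont, use assms in auto)
  then show ?thesis using assms
    by (simp only: Rr_exp[OF assms(1-3)] order_trans[OF assms(4,5)]) (intro mult_left_mono, auto)
qed

lemma Rr_mono_down:
  assumes "L > 0" "th > 0" "a \<ge> 0" "0 \<le> s" "s \<le> t" "L \<le> th"
  shows "Rr L th a t \<le> Rr L th a s"
proof -
  have "gfun L th a t \<le> gfun L th a s"
  proof (rule DERIV_nonpos_imp_decreasing_open[OF assms(5)])
    fix x assume "s < x" "x < t"
    then show "\<exists>y. DERIV (gfun L th a) x :> y \<and> y \<le> 0"
      using gfun_deriv[of L th a x] gder_nonpos[of L th a x] assms by auto
  qed (rule gfun_cont, use assms in auto)
  then show ?thesis using assms
    by (simp only: Rr_exp[OF assms(1-3)] order_trans[OF assms(4,5)]) (intro mult_left_mono, auto)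
qed

lemma Rr_nonneg: "L > 0 \<Longrightarrow> th > 0 \<Longrightarrow> a \<ge> 0 \<Longrightarrow> t \<ge> 0 \<Longrightarrow> Rr L th a t \<ge> 0"
  by (simp add: Rr_exp)

lemma FF: "(t0::real) \<ge> 0 \<Longrightarrow> (real j \<le> t0 \<longleftrightarrow> j \<le> nat \<lfloor>t0\<rfloor>)"
  by (simp add: le_nat_iff le_floor_iff)

lemma tail_le:
  fixes S :: "'a \<Rightarrow> nat"
  assumes P: "prob_space M" and evS: "\<And>j. {\<omega>\<in>space M. S \<omega> = j} \<in> sets M"
    and dS: "\<And>j. measure M {\<omega>\<in>space M. S \<omega> = j} = gen_poisson_pmf L a j"
    and L: "L > 0" and th: "th > 0" and a: "a \<ge> 0" and thL: "th \<le> L"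
    and sth: "summable (gen_poisson_pmf th a)" "suminf (gen_poisson_pmf th a) \<le> 1"
    and t0: "t0 \<ge> 0"
  shows "measure M {\<omega>\<in>space M. real (S \<omega>) \<le> t0} \<le> Rr L th a t0"
proof -
  interpret prob_space M by (rule P)
  define N where "N = nat \<lfloor>t0\<rfloor>"
  have ev: "{\<omega>\<in>space M. S \<omega> = j} \<in> events" for j using evS by simp
  have "{\<omega>\<in>space M. real (S \<omega>) \<le> t0} = (\<Union>j\<in>{..N}. {\<omega>\<in>space M. S \<omega> = j})"
    unfolding N_def using t0 FF by auto
  then have "prob {\<omega>\<in>space M. real (S \<omega>) \<le> t0} = (\<Sum>j\<le>N. prob {\<omega>\<in>space M. S \<omega> = j})"
    by (simp only:) (rule finite_measure_finite_Union, simp, use ev in blast, simp add: disjoint_family_on_def, blast)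
  also have "\<dots> = (\<Sum>j\<le>N. Rr L th a (real j) * gen_poisson_pmf th a j)"
    using dS gp_ratio[OF L th a] by simp
  also have "\<dots> \<le> (\<Sum>j\<le>N. Rr L th a t0 * gen_poisson_pmf th a j)"
  proof (rule sum_mono)
    fix j assume "j \<in> {..N}"
    then have "real j \<le> t0" unfolding N_def using t0 FF by auto
    then show "Rr L th a (real j) * gen_poisson_pmf th a j \<le> Rr L th a t0 * gen_poisson_pmf th a j"
      by (intro mult_right_mono Rr_mono_up) (use L th a thL gp_nonneg in auto)
  qed
  also have "\<dots> = Rr L th a t0 * (\<Sum>j\<le>N. gen_poisson_pmf th a j)" by (simp add: sum_distrib_left)
  also have "\<dots> \<le> Rr L th a t0 * 1"
  proof (rule mult_left_mono)
    have "(\<Sum>j\<le>N. gen_poisson_pmf th a j) \<le> suminf (gen_poisson_pmf th a)"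
      by (rule sum_le_suminf[OF sth(1)]) (use gp_nonneg th a in auto)
    then show "(\<Sum>j\<le>N. gen_poisson_pmf th a j) \<le> 1" using sth(2) by simp
  qed (rule Rr_nonneg[OF L th a t0])
  finally show ?thesis by simp
qed

lemma tail_ge:
  fixes S :: "'a \<Rightarrow> nat"
  assumes P: "prob_space M" and evS: "\<And>j. {\<omega>\<in>space M. S \<omega> = j} \<in> sets M"
    and dS: "\<And>j. measure M {\<omega>\<in>space M. S \<omega> = j} = gen_poisson_pmf L a j"
    and L: "L > 0" and th: "th > 0" and a: "a \<ge> 0" and thL: "L \<le> th"
    and sL: "gen_poisson_pmf L a sums 1"
    and sth: "summable (gen_poisson_pmf th a)" "suminf (gen_poisson_pmf th a) \<le> 1"
    and t0: "t0 \<ge> 0"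
  shows "measure M {\<omega>\<in>space M. real (S \<omega>) \<ge> t0} \<le> Rr L th a t0"
proof -
  interpret prob_space M by (rule P)
  define N where "N = nat \<lceil>t0\<rceil>"
  have ev: "{\<omega>\<in>space M. S \<omega> = j} \<in> events" for j using evS by simp
  have NN: "real j \<ge> t0 \<longleftrightarrow> j \<ge> N" for j
    unfolding N_def using t0 by (simp add: nat_le_iff ceiling_le_iff)
  have "{\<omega>\<in>space M. real (S \<omega>) \<ge> t0} = space M - (\<Union>j\<in>{..<N}. {\<omega>\<in>space M. S \<omega> = j})"
    using NN by auto
  moreover have "prob (\<Union>j\<in>{..<N}. {\<omega>\<in>space M. S \<omega> = j}) = (\<Sum>j<N. prob {\<omega>\<in>space M. S \<omega> = j})"
    by (rule finite_measure_finite_Union, simp, use ev in blast, simp add: disjoint_family_on_def, blast)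
  moreover have "(\<Union>j\<in>{..<N}. {\<omega>\<in>space M. S \<omega> = j}) \<in> events" using ev by blast
  ultimately have "prob {\<omega>\<in>space M. real (S \<omega>) \<ge> t0} = 1 - (\<Sum>j<N. gen_poisson_pmf L a j)"
    using dS by (simp add: prob_compl)
  also have "\<dots> = (\<Sum>j. gen_poisson_pmf L a (j + N))"
    using suminf_split_initial_segment[of "gen_poisson_pmf L a" N] sL by (simp add: sums_iff)
  also have "\<dots> \<le> (\<Sum>j. Rr L th a t0 * gen_poisson_pmf th a (j + N))"
  proof (rule suminf_le)
    fix j
    have "t0 \<le> real (j + N)" using NN[of "j + N"] by simp
    then show "gen_poisson_pmf L a (j + N) \<le> Rr L th a t0 * gen_poisson_pmf th a (j + N)"
      unfolding gp_ratio[OF L th a, of "j + N"]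
      by (intro mult_right_mono Rr_mono_down) (use L th a thL t0 gp_nonneg in auto)
  next
    show "summable (\<lambda>j. gen_poisson_pmf L a (j + N))"
      using sL summable_iff_shift[of "gen_poisson_pmf L a" N] by (simp add: sums_iff)
    show "summable (\<lambda>j. Rr L th a t0 * gen_poisson_pmf th a (j + N))"
      using sth(1) summable_iff_shift[of "gen_poisson_pmf th a" N] by (intro summable_mult) simp
  qed
  also have "\<dots> = Rr L th a t0 * (\<Sum>j. gen_poisson_pmf th a (j + N))"
    using sth(1) summable_iff_shift[of "gen_poisson_pmf th a" N] by (intro suminf_mult) simp
  also have "\<dots> \<le> Rr L th a t0 * 1"
  proof (rule mult_left_mono)
    have "(\<Sum>j. gen_poisson_pmf th a (j + N)) \<le> suminf (gen_poisson_pmf th a)"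
      using suminf_split_initial_segment[OF sth(1), of N] sum_nonneg[of "{..<N}" "gen_poisson_pmf th a"] gp_nonneg[OF th a]
      by simp
    then show "(\<Sum>j. gen_poisson_pmf th a (j + N)) \<le> 1" using sth(2) by simp
  qed (rule Rr_nonneg[OF L th a t0])
  finally show ?thesis by simp
qed

lemma Rr_alg:
  assumes l: "lam > 0" and w: "w > 0" and z: "z > 0" and a: "a \<ge> 0" and n0: "n > 0"
  shows "Rr (real n * lam) (real n * w) a (real n * z) =
    lam * (w + z * a) / (w * (lam + z * a)) * (((lam + z * a) / (w + z * a)) powr z * exp w / exp lam) ^ n"
proof (cases "n = 0")
  case True
  then show ?thesis using n0 by simp
next
  case False
  then have n: "real n > 0" by simp
  define q where "q = (lam + z * a) / (w + z * a)"
  have wz: "w + z * a > 0" "lam + z * a > 0" using w l z a by (simp_all add: add_pos_nonneg)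
  then have q: "q > 0" by (simp add: q_def)
  have r: "(real n * lam + real n * z * a) / (real n * w + real n * z * a) = q"
  proof -
    have "real n * lam + real n * z * a = real n * (lam + z * a)"
         "real n * w + real n * z * a = real n * (w + z * a)" by (simp_all add: algebra_simps)
    then show ?thesis unfolding q_def using n by simp
  qed
  have p: "q powr (real n * z - 1) = (q powr z) ^ n / q"
    using q by (simp add: powr_diff powr_power mult.commute)
  have e: "exp (real n * w - real n * lam) = (exp w / exp lam) ^ n"
    by (simp add: exp_diff[symmetric] exp_of_nat_mult[symmetric] algebra_simps)
  have "Rr (real n * lam) (real n * w) a (real n * z) = (lam / w) * (q powr z) ^ n / q * (exp w / exp lam) ^ n"
    unfolding Rr_def using r p e n by (simp add: mult.assoc)
  also have "\<dots> = lam * (w + z * a) / (w * (lam + z * a)) * ((q powr z) * exp w / exp lam) ^ n"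
    using wz w by (simp add: q_def power_mult_distrib field_simps)
  finally show ?thesis by (simp add: q_def)
qed

lemma nu_pos:
  assumes "0 \<le> a" "a < 1" "z > 0" "n > 0"
  shows "((1 - a) * z + sqrt ((1 - a)^2 * z^2 + 4 * z * a / real n)) / 2 > 0"
proof -
  have "(1 - a) * z > 0" using assms by simp
  moreover have "sqrt ((1 - a)^2 * z^2 + 4 * z * a / real n) \<ge> 0" using assms by simp
  ultimately show ?thesis by (intro divide_pos_pos add_pos_nonneg) auto
qed

lemma nu_le:
  assumes a: "0 \<le> a" "a < 1" and z: "z > 0" and n: "n > 0" and l: "lam > 0"
    and zc: "z \<le> lam / (1 - a + a / (real n * lam))"
  shows "((1 - a) * z + sqrt ((1 - a)^2 * z^2 + 4 * z * a / real n)) / 2 \<le> lam"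
proof -
  have c: "1 - a + a / (real n * lam) > 0" using a n l by (simp add: add_pos_nonneg)
  have "z * (1 - a + a / (real n * lam)) \<le> lam" using zc c by (simp add: le_divide_eq)
  then have "lam * (z * (1 - a + a / (real n * lam))) \<le> lam * lam" using l by simp
  moreover have "lam * (z * (1 - a + a / (real n * lam))) = lam * (1 - a) * z + z * a / real n"
    using l n by (simp add: field_simps)
  ultimately have k: "z * a / real n \<le> lam^2 - lam * (1 - a) * z"
    by (simp add: power2_eq_square)
  have k2: "(1 - a) * z \<le> lam"
  proof -
    have "z * a / real n \<ge> 0" using a z n by simp
    then have "lam * (1 - a) * z \<le> lam * lam" using k by (simp add: power2_eq_square)
    then show ?thesis using l by (simp add: mult.assoc)
  qed
  have "(1 - a)^2 * z^2 + 4 * z * a / real n \<le> (2 * lam - (1 - a) * z)^2"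
  proof -
    have e1: "(2 * lam - (1 - a) * z)^2 = (1 - a)^2 * z^2 + 4 * (lam^2 - lam * (1 - a) * z)"
      by (simp add: power2_eq_square algebra_simps)
    have e4: "4 * z * a / real n = 4 * (z * a / real n)" by simp
    show ?thesis unfolding e1 e4 using k by (intro add_left_mono mult_left_mono) auto
  qed
  then have "sqrt ((1 - a)^2 * z^2 + 4 * z * a / real n) \<le> 2 * lam - (1 - a) * z"
    using k2 l by (intro real_le_lsqrt) auto
  then show ?thesis by simp
qed

lemma nu_ge:
  assumes a: "0 \<le> a" "a < 1" and n: "n > 0" and l: "lam > 0"
    and zc: "z \<ge> lam / (1 - a + a / (real n * lam))"
  shows "((1 - a) * z + sqrt ((1 - a)^2 * z^2 + 4 * z * a / real n)) / 2 \<ge> lam"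
proof -
  have c: "1 - a + a / (real n * lam) > 0" using a n l by (simp add: add_pos_nonneg)
  have "z * (1 - a + a / (real n * lam)) \<ge> lam" using zc c by (simp add: divide_le_eq)
  then have "lam * (z * (1 - a + a / (real n * lam))) \<ge> lam * lam" using l by simp
  moreover have "lam * (z * (1 - a + a / (real n * lam))) = lam * (1 - a) * z + z * a / real n"
    using l n by (simp add: field_simps)
  ultimately have k: "z * a / real n \<ge> lam^2 - lam * (1 - a) * z"
    by (simp add: power2_eq_square)
  show ?thesis
  proof (cases "2 * lam - (1 - a) * z \<le> 0")
    case True
    moreover have "sqrt ((1 - a)^2 * z^2 + 4 * z * a / real n) \<ge> 0"
    proof -
      have "z > 0" using zc c l by (smt (verit) divide_pos_pos)
      then show ?thesis using a n by (intro real_sqrt_ge_zero add_nonneg_nonneg divide_nonneg_pos mult_nonneg_nonneg) auto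
    qed
    moreover have gen: "\<And>S. 2 * lam - (1 - a) * z \<le> 0 \<Longrightarrow> 0 \<le> S \<Longrightarrow> lam \<le> ((1 - a) * z + S) / 2"
      by (simp add: field_simps)
    ultimately show ?thesis by blast
  next
    case False
    have "(2 * lam - (1 - a) * z)^2 \<le> (1 - a)^2 * z^2 + 4 * z * a / real n"
    proof -
      have e1: "(2 * lam - (1 - a) * z)^2 = (1 - a)^2 * z^2 + 4 * (lam^2 - lam * (1 - a) * z)"
        by (simp add: power2_eq_square algebra_simps)
      have e4: "4 * z * a / real n = 4 * (z * a / real n)" by simp
      show ?thesis unfolding e1 e4 using k by (intro add_left_mono mult_left_mono) auto
    qed
    then have "2 * lam - (1 - a) * z \<le> sqrt ((1 - a)^2 * z^2 + 4 * z * a / real n)"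
      using False by (intro real_le_rsqrt) auto
    then show ?thesis by simp
  qed
qed

lemma main_setup:
  fixes M :: "'a measure" and X :: "nat \<Rightarrow> 'a \<Rightarrow> nat"
    and lam alpha :: real and n :: nat
  assumes P: "prob_space M"
    and "lam > 0" and "0 \<le> alpha" and "alpha < 1" and "n \<ge> 1"
    and meas: "\<And>i. i < n \<Longrightarrow> X i \<in> measurable M (count_space UNIV)"
    and ind: "prob_space.indep_vars M (\<lambda>_. count_space UNIV) X {..<n}"
    and dist: "\<And>i x. i < n \<Longrightarrow>
           measure M {\<omega> \<in> space M. X i \<omega> = x} = gen_poisson_pmf lam alpha x"
  shows "(\<forall>j. measure M {\<omega> \<in> space M. (\<Sum>i<n. X i \<omega>) = j} = gen_poisson_pmf (real n * lam) alpha j)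
    \<and> (\<forall>j. {\<omega> \<in> space M. (\<Sum>i<n. X i \<omega>) = j} \<in> sets M)
    \<and> gen_poisson_pmf lam alpha sums 1
    \<and> gen_poisson_pmf (real n * lam) alpha sums 1"
proof -
  interpret prob_space M by (rule P)
  obtain m where nm: "n = Suc m" using \<open>n \<ge> 1\<close> by (cases n) auto
  define p where "p k x = (if k = 0 then (if x = 0 then 1 else 0) else gen_poisson_pmf (real k * lam) alpha x)" for k x
  have pS: "p (Suc k) x = (\<Sum>j\<le>x. p k j * gen_poisson_pmf lam alpha (x - j))" for k x
  proof (cases k)
    case 0
    have "(\<Sum>j\<le>x. p k j * gen_poisson_pmf lam alpha (x - j)) = (\<Sum>j\<in>{0}. p k j * gen_poisson_pmf lam alpha (x - j))"
      by (rule sum.mono_neutral_right) (auto simp: p_def 0)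
    then show ?thesis by (simp add: p_def 0)
  next
    case (Suc k')
    have "real (Suc k) * lam = real k * lam + lam" by (simp add: algebra_simps)
    then show ?thesis using gp_conv[of "real k * lam" lam alpha x] assms Suc by (simp add: p_def)
  qed
  have d1: "measure M {\<omega> \<in> space M. (\<Sum>i<n. X i \<omega>) = j} = gen_poisson_pmf (real n * lam) alpha j" for j
    using sum_dist[OF P meas ind dist, of p m j] pS nm by (simp add: p_def)
  have measX: "(\<lambda>\<omega>. real (X i \<omega>)) \<in> borel_measurable M" if "i < n" for i
  proof -
    have r: "real \<in> measurable (count_space UNIV) borel" by (simp add: measurable_count_space_eq1)
    from \<open>i < n\<close> show ?thesis by (rule measurable_compose[OF meas r])
  qed
  have mS: "(\<lambda>\<omega>. \<Sum>i<n. real (X i \<omega>)) \<in> borel_measurable M"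
    by (rule borel_measurable_sum, rule measX) (use nm in simp)
  have ev: "{\<omega> \<in> space M. (\<Sum>i<n. X i \<omega>) = j} \<in> sets M" for j
  proof -
    have "{\<omega> \<in> space M. (\<Sum>i<n. X i \<omega>) = j} = (\<lambda>\<omega>. \<Sum>i<n. real (X i \<omega>)) -` {real j} \<inter> space M"
      by (auto simp flip: of_nat_sum)
    then show ?thesis using mS by simp
  qed
  have s1: "gen_poisson_pmf lam alpha sums 1"
  proof -
    have ev0: "{\<omega> \<in> space M. X 0 \<omega> = x} \<in> sets M" for x
    proof -
      have "X 0 \<in> measurable M (count_space UNIV)" using meas[of 0] nm by simp
      then show ?thesis by measurable
    qed
    have "(\<lambda>x. prob {\<omega> \<in> space M. X 0 \<omega> = x}) sums prob (\<Union>x. {\<omega> \<in> space M. X 0 \<omega> = x})"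
      by (rule finite_measure_UNION) (use ev0 in \<open>auto simp: disjoint_family_on_def\<close>)
    moreover have "(\<Union>x. {\<omega> \<in> space M. X 0 \<omega> = x}) = space M" by auto
    ultimately show ?thesis using dist[of 0] nm prob_space by simp
  qed
  have sL: "gen_poisson_pmf (real n * lam) alpha sums 1"
  proof -
    have "summable (gen_poisson_pmf (real (Suc m) * lam) alpha) \<and>
         suminf (gen_poisson_pmf (real (Suc m) * lam) alpha) = suminf (gen_poisson_pmf lam alpha) ^ Suc m"
      by (rule gp_mult) (use assms s1 in \<open>auto simp: sums_iff\<close>)
    then show ?thesis using s1 nm by (simp add: sums_iff)
  qed
  show ?thesis using d1 ev s1 sL by blast
qed

lemma part1234:
  fixes M :: "'a measure" and X :: "nat \<Rightarrow> 'a \<Rightarrow> nat"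
    and lam alpha :: real and n :: nat
  assumes P: "prob_space M"
    and l: "lam > 0" and a0: "0 \<le> alpha" and a1: "alpha < 1" and n1: "n \<ge> 1"
    and meas: "\<And>i. i < n \<Longrightarrow> X i \<in> measurable M (count_space UNIV)"
    and ind: "prob_space.indep_vars M (\<lambda>_. count_space UNIV) X {..<n}"
    and dist: "\<And>i x. i < n \<Longrightarrow>
           measure M {\<omega> \<in> space M. X i \<omega> = x} = gen_poisson_pmf lam alpha x"
  shows
  "(\<forall>z::real. 0 < z \<and> z \<le> lam / (1 - alpha) \<longrightarrow>
      measure M {\<omega> \<in> space M. (\<Sum>i<n. real (X i \<omega>)) / real n \<le> z}
      \<le> lam / ((1 - alpha) * (lam + z * alpha)) *
         ((lam / z + alpha) powr z * exp ((1 - alpha) * z) / exp lam) ^ n)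
 \<and> (\<forall>z::real. z \<ge> lam / (1 - alpha) \<longrightarrow>
      measure M {\<omega> \<in> space M. (\<Sum>i<n. real (X i \<omega>)) / real n \<ge> z}
      \<le> lam / ((1 - alpha) * (lam + z * alpha)) *
         ((lam / z + alpha) powr z * exp ((1 - alpha) * z) / exp lam) ^ n)
 \<and> (\<forall>z::real. 0 < z \<and> z \<le> lam / (1 - alpha + alpha / (real n * lam)) \<longrightarrow>
      (let \<nu> = ((1 - alpha) * z + sqrt ((1 - alpha)^2 * z^2 + 4 * z * alpha / real n)) / 2 in
      measure M {\<omega> \<in> space M. (\<Sum>i<n. real (X i \<omega>)) / real n \<le> z}
      \<le> lam * (\<nu> + z * alpha) / (\<nu> * (lam + z * alpha)) *
         (((lam + z * alpha) / (\<nu> + z * alpha)) powr z * exp \<nu> / exp lam) ^ n))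
 \<and> (\<forall>z::real. z \<ge> lam / (1 - alpha + alpha / (real n * lam)) \<longrightarrow>
      (let \<nu> = ((1 - alpha) * z + sqrt ((1 - alpha)^2 * z^2 + 4 * z * alpha / real n)) / 2 in
      measure M {\<omega> \<in> space M. (\<Sum>i<n. real (X i \<omega>)) / real n \<ge> z}
      \<le> lam * (\<nu> + z * alpha) / (\<nu> * (lam + z * alpha)) *
         (((lam + z * alpha) / (\<nu> + z * alpha)) powr z * exp \<nu> / exp lam) ^ n))"
proof -
  note st = main_setup[OF assms]
  define S where "S \<omega> = (\<Sum>i<n. X i \<omega>)" for \<omega>
  have dS: "\<And>j. measure M {\<omega>\<in>space M. S \<omega> = j} = gen_poisson_pmf (real n * lam) alpha j"
    and eS: "\<And>j. {\<omega>\<in>space M. S \<omega> = j} \<in> sets M"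
    and s1: "gen_poisson_pmf lam alpha sums 1"
    and sL: "gen_poisson_pmf (real n * lam) alpha sums 1"
    using st by (auto simp: S_def)
  have np: "real n > 0" using n1 by simp
  have Lp: "real n * lam > 0" using np l by simp
  have norm: "summable (gen_poisson_pmf th alpha) \<and> suminf (gen_poisson_pmf th alpha) \<le> 1" if "th > 0" for th
    by (rule gp_norm_le[OF l a0 s1 that])
  have setle: "{\<omega> \<in> space M. (\<Sum>i<n. real (X i \<omega>)) / real n \<le> z} = {\<omega>\<in>space M. real (S \<omega>) \<le> real n * z}" for z
    using np by (auto simp: S_def pos_divide_le_eq mult.commute simp flip: of_nat_sum)
  have setge: "{\<omega> \<in> space M. (\<Sum>i<n. real (X i \<omega>)) / real n \<ge> z} = {\<omega>\<in>space M. real (S \<omega>) \<ge> real n * z}" for z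
    using np by (auto simp: S_def pos_le_divide_eq mult.commute simp flip: of_nat_sum)
  have low: "measure M {\<omega> \<in> space M. (\<Sum>i<n. real (X i \<omega>)) / real n \<le> z}
      \<le> lam * (w + z * alpha) / (w * (lam + z * alpha)) * (((lam + z * alpha) / (w + z * alpha)) powr z * exp w / exp lam) ^ n"
    if w: "w > 0" "w \<le> lam" and z: "z > 0" for w z
  proof -
    have "measure M {\<omega>\<in>space M. real (S \<omega>) \<le> real n * z} \<le> Rr (real n * lam) (real n * w) alpha (real n * z)"
      by (rule tail_le[OF P eS dS Lp _ a0 _ _ _]) (use norm[of "real n * w"] np w z in auto)
    then show ?thesis unfolding setle using Rr_alg[OF l w(1) z a0, of n] n1 by simp
  qed
  have high: "measure M {\<omega> \<in> space M. (\<Sum>i<n. real (X i \<omega>)) / real n \<ge> z}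
      \<le> lam * (w + z * alpha) / (w * (lam + z * alpha)) * (((lam + z * alpha) / (w + z * alpha)) powr z * exp w / exp lam) ^ n"
    if w: "w > 0" "lam \<le> w" and z: "z > 0" for w z
  proof -
    have "measure M {\<omega>\<in>space M. real (S \<omega>) \<ge> real n * z} \<le> Rr (real n * lam) (real n * w) alpha (real n * z)"
      by (rule tail_ge[OF P eS dS Lp _ a0 _ sL _ _]) (use norm[of "real n * w"] np w z in auto)
    then show ?thesis unfolding setge using Rr_alg[OF l w(1) z a0, of n] n1 by simp
  qed
  have conv: "lam * (z * (1 - alpha) + z * alpha) / (z * (1 - alpha) * (lam + z * alpha)) *
      (((lam + z * alpha) / (z * (1 - alpha) + z * alpha)) powr z * exp (z * (1 - alpha)) / exp lam) ^ n
    = lam / ((1 - alpha) * (lam + z * alpha)) * ((lam / z + alpha) powr z * exp ((1 - alpha) * z) / exp lam) ^ n"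
    if z: "z > 0" for z
  proof -
    have "z * (1 - alpha) + z * alpha = z" by (simp add: algebra_simps)
    moreover have "(lam + z * alpha) / z = lam / z + alpha" using z by (simp add: field_simps)
    ultimately show ?thesis using z by (simp add: mult.commute)
  qed
  have c1: "1 - alpha > 0" using a1 by simp
  have P1: "\<forall>z::real. 0 < z \<and> z \<le> lam / (1 - alpha) \<longrightarrow>
      measure M {\<omega> \<in> space M. (\<Sum>i<n. real (X i \<omega>)) / real n \<le> z}
      \<le> lam / ((1 - alpha) * (lam + z * alpha)) *
         ((lam / z + alpha) powr z * exp ((1 - alpha) * z) / exp lam) ^ n"
  proof (intro allI impI, elim conjE)
    fix z :: real assume z: "0 < z" "z \<le> lam / (1 - alpha)"
    have "z * (1 - alpha) \<le> lam" using z c1 by (simp add: le_divide_eq)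
    then show "measure M {\<omega> \<in> space M. (\<Sum>i<n. real (X i \<omega>)) / real n \<le> z}
      \<le> lam / ((1 - alpha) * (lam + z * alpha)) *
         ((lam / z + alpha) powr z * exp ((1 - alpha) * z) / exp lam) ^ n"
      using low[of "z * (1 - alpha)" z] z c1 conv[of z] by simp
  qed
  have P2: "\<forall>z::real. z \<ge> lam / (1 - alpha) \<longrightarrow>
      measure M {\<omega> \<in> space M. (\<Sum>i<n. real (X i \<omega>)) / real n \<ge> z}
      \<le> lam / ((1 - alpha) * (lam + z * alpha)) *
         ((lam / z + alpha) powr z * exp ((1 - alpha) * z) / exp lam) ^ n"
  proof (intro allI impI)
    fix z :: real assume z: "z \<ge> lam / (1 - alpha)"
    have zp: "z > 0" using z c1 l by (smt (verit) divide_pos_pos)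
    have "z * (1 - alpha) \<ge> lam" using z c1 by (simp add: divide_le_eq)
    then show "measure M {\<omega> \<in> space M. (\<Sum>i<n. real (X i \<omega>)) / real n \<ge> z}
      \<le> lam / ((1 - alpha) * (lam + z * alpha)) *
         ((lam / z + alpha) powr z * exp ((1 - alpha) * z) / exp lam) ^ n"
      using high[of "z * (1 - alpha)" z] zp c1 conv[of z] by simp
  qed
  have P3: "\<forall>z::real. 0 < z \<and> z \<le> lam / (1 - alpha + alpha / (real n * lam)) \<longrightarrow>
      (let \<nu> = ((1 - alpha) * z + sqrt ((1 - alpha)^2 * z^2 + 4 * z * alpha / real n)) / 2 in
      measure M {\<omega> \<in> space M. (\<Sum>i<n. real (X i \<omega>)) / real n \<le> z}
      \<le> lam * (\<nu> + z * alpha) / (\<nu> * (lam + z * alpha)) *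
         (((lam + z * alpha) / (\<nu> + z * alpha)) powr z * exp \<nu> / exp lam) ^ n)"
  proof (intro allI impI, elim conjE)
    fix z :: real assume z: "0 < z" "z \<le> lam / (1 - alpha + alpha / (real n * lam))"
    define nu where "nu = ((1 - alpha) * z + sqrt ((1 - alpha)^2 * z^2 + 4 * z * alpha / real n)) / 2"
    have "nu > 0" unfolding nu_def using nu_pos[OF a0 a1 z(1), of n] n1 by simp
    moreover have "nu \<le> lam" unfolding nu_def using nu_le[OF a0 a1 z(1) _ l z(2)] n1 by simp
    ultimately show "let \<nu> = ((1 - alpha) * z + sqrt ((1 - alpha)^2 * z^2 + 4 * z * alpha / real n)) / 2 in
      measure M {\<omega> \<in> space M. (\<Sum>i<n. real (X i \<omega>)) / real n \<le> z}
      \<le> lam * (\<nu> + z * alpha) / (\<nu> * (lam + z * alpha)) *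
         (((lam + z * alpha) / (\<nu> + z * alpha)) powr z * exp \<nu> / exp lam) ^ n"
      unfolding Let_def nu_def[symmetric] using low[of nu z] z by simp
  qed
  have P4: "\<forall>z::real. z \<ge> lam / (1 - alpha + alpha / (real n * lam)) \<longrightarrow>
      (let \<nu> = ((1 - alpha) * z + sqrt ((1 - alpha)^2 * z^2 + 4 * z * alpha / real n)) / 2 in
      measure M {\<omega> \<in> space M. (\<Sum>i<n. real (X i \<omega>)) / real n \<ge> z}
      \<le> lam * (\<nu> + z * alpha) / (\<nu> * (lam + z * alpha)) *
         (((lam + z * alpha) / (\<nu> + z * alpha)) powr z * exp \<nu> / exp lam) ^ n)"
  proof (intro allI impI)
    fix z :: real assume z: "z \<ge> lam / (1 - alpha + alpha / (real n * lam))"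
    have c: "1 - alpha + alpha / (real n * lam) > 0" using a0 a1 np l by (simp add: add_pos_nonneg)
    have zp: "z > 0" using z c l by (smt (verit) divide_pos_pos)
    define nu where "nu = ((1 - alpha) * z + sqrt ((1 - alpha)^2 * z^2 + 4 * z * alpha / real n)) / 2"
    have "nu > 0" unfolding nu_def using nu_pos[OF a0 a1 zp, of n] n1 by simp
    moreover have "nu \<ge> lam" unfolding nu_def using nu_ge[OF a0 a1 _ l z] n1 by simp
    ultimately show "let \<nu> = ((1 - alpha) * z + sqrt ((1 - alpha)^2 * z^2 + 4 * z * alpha / real n)) / 2 in
      measure M {\<omega> \<in> space M. (\<Sum>i<n. real (X i \<omega>)) / real n \<ge> z}
      \<le> lam * (\<nu> + z * alpha) / (\<nu> * (lam + z * alpha)) *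
         (((lam + z * alpha) / (\<nu> + z * alpha)) powr z * exp \<nu> / exp lam) ^ n"
      unfolding Let_def nu_def[symmetric] using high[of nu z] zp by simp
  qed
  show ?thesis using P1 P2 P3 P4 by blast
qed

definition pk :: "real \<Rightarrow> nat \<Rightarrow> real" where
  "pk z k = z ^ k / fact k * exp (- z)"

definition ffac :: "nat \<Rightarrow> nat \<Rightarrow> real" where
  "ffac r k = (\<Prod>i<r. real k - real i)"

lemma pk_sums: "pk z sums 1"
proof -
  have "(\<lambda>n. z ^ n /\<^sub>R fact n) sums exp z" by (rule exp_converges)
  then have "(\<lambda>n. z ^ n /\<^sub>R fact n * exp (- z)) sums (exp z * exp (- z))" by (rule sums_mult2)
  moreover have "pk z = (\<lambda>n. z ^ n /\<^sub>R fact n * exp (- z))"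
    by (rule ext) (simp add: pk_def divide_inverse)
  ultimately show ?thesis by (simp add: mult_exp_exp)
qed

lemma ffac_zero: "k < r \<Longrightarrow> ffac r k = 0"
  unfolding ffac_def by (rule prod_zero) auto

lemma fact_ffac: "fact (i + r) = fact i * ffac r (i + r)"
proof (induction r)
  case 0 then show ?case by (simp add: ffac_def)
next
  case (Suc r)
  have "ffac (Suc r) (i + Suc r) = real (i + Suc r) * ffac r (i + r)"
    unfolding ffac_def by (simp only: prod.lessThan_Suc_shift) (simp add: algebra_simps)
  then show ?case using Suc by (simp add: algebra_simps)
qed

lemma pk_ffac_sums: "(\<lambda>k. pk z k * ffac r k) sums (z ^ r)"
proof -
  have "(\<lambda>i. pk z (i + r) * ffac r (i + r)) = (\<lambda>i. z ^ r * pk z i)"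
  proof
    fix i
    have "fact (i + r) \<noteq> (0::real)" by simp
    then show "pk z (i + r) * ffac r (i + r) = z ^ r * pk z i"
      unfolding pk_def using fact_ffac[of i r] by (simp add: power_add field_simps)
  qed
  moreover have "(\<lambda>i. z ^ r * pk z i) sums (z ^ r)" using sums_mult[OF pk_sums, of "z ^ r"] by simp
  ultimately have "(\<lambda>i. pk z (i + r) * ffac r (i + r)) sums (z ^ r)" by simp
  then have "(\<lambda>k. pk z k * ffac r k) sums (z ^ r + (\<Sum>i<r. pk z i * ffac r i))"
    using sums_iff_shift[of "\<lambda>k. pk z k * ffac r k" r "z ^ r"] by simp
  moreover have "(\<Sum>i<r. pk z i * ffac r i) = 0" by (simp add: ffac_zero)
  ultimately show ?thesis by simp
qed

lemma ffac_1: "ffac 1 k = real k" by (simp add: ffac_def)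
lemma ffac_1': "ffac (Suc 0) k = real k" by (simp add: ffac_def)
lemma ffac_2: "ffac 2 k = real k * (real k - 1)" by (simp add: ffac_def numeral_2_eq_2)
lemma ffac_3: "ffac 3 k = real k * (real k - 1) * (real k - 2)"
  by (simp add: ffac_def numeral_3_eq_3 algebra_simps)
lemma ffac_4: "ffac 4 k = real k * (real k - 1) * (real k - 2) * (real k - 3)"
proof -
  have "(4::nat) = Suc 3" by simp
  then show ?thesis by (simp only: ffac_def prod.lessThan_Suc) (simp add: numeral_3_eq_3 algebra_simps)
qed

lemma mom1: "(\<lambda>k. pk z k * (real k - z)) sums 0"
proof -
  have "(\<lambda>k. pk z k * ffac 1 k - z * pk z k) sums (z ^ 1 - z * 1)"
    by (intro sums_diff pk_ffac_sums sums_mult pk_sums)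
  then show ?thesis by (simp add: ffac_1 ffac_1' algebra_simps)
qed

lemma mom2: "(\<lambda>k. pk z k * (real k - z)^2) sums z"
proof -
  have "(\<lambda>k. pk z k * ffac 2 k + (1 - 2 * z) * (pk z k * ffac 1 k) + z^2 * pk z k)
      sums (z^2 + (1 - 2 * z) * z ^ 1 + z^2 * 1)"
    by (intro sums_add pk_ffac_sums sums_mult pk_sums)
  moreover have "(\<lambda>k. pk z k * ffac 2 k + (1 - 2 * z) * (pk z k * ffac 1 k) + z^2 * pk z k)
      = (\<lambda>k. pk z k * (real k - z)^2)"
    by (rule ext) (simp add: ffac_1 ffac_1' ffac_2 power2_eq_square algebra_simps)
  moreover have "z^2 + (1 - 2 * z) * z ^ 1 + z^2 * 1 = z" by (simp add: power2_eq_square algebra_simps)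
  ultimately show ?thesis by simp
qed

lemma mom4: "(\<lambda>k. pk z k * (real k - z)^4) sums (3 * z^2 + z)"
proof -
  have "(\<lambda>k. pk z k * ffac 4 k + (6 - 4 * z) * (pk z k * ffac 3 k)
        + (7 - 12 * z + 6 * z^2) * (pk z k * ffac 2 k)
        + (1 - 4 * z + 6 * z^2 - 4 * z^3) * (pk z k * ffac 1 k) + z^4 * pk z k)
      sums (z^4 + (6 - 4 * z) * z^3 + (7 - 12 * z + 6 * z^2) * z^2
            + (1 - 4 * z + 6 * z^2 - 4 * z^3) * z ^ 1 + z^4 * 1)"
    by (intro sums_add pk_ffac_sums sums_mult pk_sums)
  moreover have "(\<lambda>k. pk z k * ffac 4 k + (6 - 4 * z) * (pk z k * ffac 3 k)
        + (7 - 12 * z + 6 * z^2) * (pk z k * ffac 2 k)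
        + (1 - 4 * z + 6 * z^2 - 4 * z^3) * (pk z k * ffac 1 k) + z^4 * pk z k)
      = (\<lambda>k. pk z k * (real k - z)^4)"
    by (rule ext) (simp add: ffac_1 ffac_1' ffac_2 ffac_3 ffac_4, algebra)
  moreover have "z^4 + (6 - 4 * z) * z^3 + (7 - 12 * z + 6 * z^2) * z^2
            + (1 - 4 * z + 6 * z^2 - 4 * z^3) * z ^ 1 + z^4 * 1 = 3 * z^2 + z"
    by algebra
  ultimately show ?thesis by simp
qed


definition mu :: "real \<Rightarrow> real measure" where
  "mu z = distr (measure_pmf (poisson_pmf z)) borel (\<lambda>k. real k - z)"

lemma mu_int:
  assumes z: "z > 0" and h: "h \<in> borel_measurable borel"
    and s: "(\<lambda>k. pk z k * h (real k - z)) sums s"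
    and a: "summable (\<lambda>k. pk z k * \<bar>h (real k - z)\<bar>)"
  shows "integrable (mu z) h \<and> integral\<^sup>L (mu z) h = s"
proof -
  have pm: "pmf (poisson_pmf z) = pk z" using z by (simp add: fun_eq_iff pk_def)
  have pk0: "pk z k \<ge> 0" for k using z by (simp add: pk_def)
  have md: "mu z = distr (density (count_space UNIV) (pk z)) borel (\<lambda>k. real k - z)"
    unfolding mu_def measure_pmf_eq_density pm ..
  have i1: "integrable (count_space UNIV) (\<lambda>k. pk z k *\<^sub>R h (real k - z))"
    unfolding integrable_count_space_nat_iff using a pk0 by (simp add: abs_mult)
  have "integrable (density (count_space UNIV) (pk z)) (\<lambda>k. h (real k - z))"
    using i1 pk0 by (subst integrable_density) auto
  then have i: "integrable (mu z) h"
    unfolding md using h by (subst integrable_distr_eq) auto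
  have "integral\<^sup>L (mu z) h = integral\<^sup>L (density (count_space UNIV) (pk z)) (\<lambda>k. h (real k - z))"
    unfolding md using h by (subst integral_distr) auto
  also have "\<dots> = integral\<^sup>L (count_space UNIV) (\<lambda>k. pk z k *\<^sub>R h (real k - z))"
    using pk0 by (subst integral_density) auto
  also have "\<dots> = (\<Sum>k. pk z k * h (real k - z))"
    using i1 by (simp add: integral_count_space_nat)
  also have "\<dots> = s" using s by (simp add: sums_iff)
  finally show ?thesis using i by simp
qed

lemma mu_prob: "z > 0 \<Longrightarrow> prob_space (mu z)"
  unfolding mu_def by (intro prob_space.prob_space_distr measure_pmf.prob_space_axioms) simp

lemma sets_mu[simp]: "sets (mu z) = sets borel"
  unfolding mu_def by simp

lemma mu_moments:
  assumes z: "z > 0"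
  shows "integrable (mu z) (\<lambda>x. x) \<and> integral\<^sup>L (mu z) (\<lambda>x. x) = 0"
    "integrable (mu z) (\<lambda>x. x^2) \<and> integral\<^sup>L (mu z) (\<lambda>x. x^2) = z"
    "integrable (mu z) (\<lambda>x. x^4) \<and> integral\<^sup>L (mu z) (\<lambda>x. x^4) = 3 * z^2 + z"
proof -
  have pk0: "pk z k \<ge> 0" for k using z by (simp add: pk_def)
  have s2: "summable (\<lambda>k. pk z k * (real k - z)^2)" using mom2 by (simp add: sums_iff)
  have s4: "summable (\<lambda>k. pk z k * (real k - z)^4)" using mom4 by (simp add: sums_iff)
  show "integrable (mu z) (\<lambda>x. x^2) \<and> integral\<^sup>L (mu z) (\<lambda>x. x^2) = z"
    by (rule mu_int[OF z _ mom2]) (use s2 in auto)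
  show "integrable (mu z) (\<lambda>x. x^4) \<and> integral\<^sup>L (mu z) (\<lambda>x. x^4) = 3 * z^2 + z"
    by (rule mu_int[OF z _ mom4]) (use s4 in \<open>auto simp: abs_mult\<close>)
  have s0: "summable (pk z)" using pk_sums by (simp add: sums_iff)
  have sb: "summable (\<lambda>k. pk z k + pk z k * (real k - z)^2)" using s0 s2 by (rule summable_add)
  have ab: "\<bar>y\<bar> \<le> 1 + y^2" for y :: real
  proof (cases "\<bar>y\<bar> \<le> 1")
    case True then show ?thesis by (simp add: add_increasing2)
  next
    case False
    then have "\<bar>y\<bar> * 1 \<le> \<bar>y\<bar> * \<bar>y\<bar>" by (intro mult_left_mono) auto
    then show ?thesis by (simp add: power2_eq_square abs_mult_self_eq)
  qed
  have le: "norm (pk z k * \<bar>real k - z\<bar>) \<le> pk z k + pk z k * (real k - z)^2" for k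
  proof -
    have "pk z k * \<bar>real k - z\<bar> \<le> pk z k * (1 + (real k - z)^2)"
      by (rule mult_left_mono[OF ab pk0])
    then show ?thesis using pk0[of k] by (simp add: distrib_left abs_mult)
  qed
  have "summable (\<lambda>k. pk z k * \<bar>real k - z\<bar>)"
    by (rule summable_comparison_test'[OF sb le])
  then show "integrable (mu z) (\<lambda>x. x) \<and> integral\<^sup>L (mu z) (\<lambda>x. x) = 0"
    by (intro mu_int[OF z _ mom1]) auto
qed


lemma amgm: assumes c: "c > 0" shows "(t::real)^3 \<le> (c * t^2 + t^4 / c) / 2"
proof -
  have "0 \<le> t^2 * (c - t)^2" by simp
  then have "2 * c * t^3 \<le> c * c * t^2 + t^4"
    by (simp add: power2_eq_square power3_eq_cube power4_eq_xxxx algebra_simps)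
  then show ?thesis using c by (simp add: field_simps power2_eq_square power3_eq_cube power4_eq_xxxx)
qed

lemma mu_abs3:
  assumes z: "z > 0"
  shows "integrable (mu z) (\<lambda>x. \<bar>x\<bar>^3) \<and> integral\<^sup>L (mu z) (\<lambda>x. \<bar>x\<bar>^3) \<le> z * sqrt (3 * z + 1)"
proof -
  define c where "c = sqrt (3 * z + 1)"
  have c: "c > 0" using z by (simp add: c_def)
  have cc: "c * c = 3 * z + 1" using z by (simp add: c_def)
  note m = mu_moments[OF z]
  define f where "f x = (c * x^2 + x^4 / c) / 2" for x :: real
  have fi: "integrable (mu z) f" unfolding f_def using m by auto
  have fint: "integral\<^sup>L (mu z) f = (c * z + (3 * z^2 + z) / c) / 2"
    unfolding f_def using m by simp
  have pw: "\<bar>x\<bar>^3 \<le> f x" for x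
    unfolding f_def using amgm[OF c, of "\<bar>x\<bar>"] by (simp add: power_even_abs_numeral)
  have i3: "integrable (mu z) (\<lambda>x. \<bar>x\<bar>^3)"
  proof (rule Bochner_Integration.integrable_bound[OF fi])
    show "(\<lambda>x. \<bar>x\<bar>^3) \<in> borel_measurable (mu z)" by (simp add: measurable_cong_sets[OF sets_mu refl])
    show "AE x in mu z. norm (\<bar>x\<bar>^3) \<le> norm (f x)"
      using pw by (intro AE_I2) (smt (verit, best) real_norm_def zero_le_power abs_ge_zero)
  qed
  have "integral\<^sup>L (mu z) (\<lambda>x. \<bar>x\<bar>^3) \<le> integral\<^sup>L (mu z) f"
    by (rule integral_mono[OF i3 fi pw])
  also have "\<dots> = z * c"
  proof -
    have "c * (c * z) = (c * c) * z" by simp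
    then show ?thesis unfolding fint using c cc by (simp add: field_simps power2_eq_square)
  qed
  finally show ?thesis using i3 c_def by simp
qed

abbreviation "PhiD \<equiv> density lborel std_normal_density"

lemma phi_le1: "std_normal_density x \<le> 1"
proof -
  have "exp (- x\<^sup>2 / 2) \<le> 1" by simp
  moreover have "1 / sqrt (2 * pi) \<le> 1" using pi_gt3 by (simp add: divide_le_eq real_le_rsqrt)
  ultimately show ?thesis unfolding std_normal_density_def
    by (metis exp_gt_zero less_eq_real_def mult_le_one zero_le_divide_1_iff real_sqrt_ge_zero)
qed

lemma phi_even: "std_normal_density (- x) = std_normal_density x"
  by (simp add: std_normal_density_def)

lemma PhiD_le: "A \<in> sets borel \<Longrightarrow> emeasure PhiD A \<le> emeasure lborel A"
proof -
  assume A: "A \<in> sets borel"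
  have "emeasure PhiD A = (\<integral>\<^sup>+ x. ennreal (std_normal_density x) * indicator A x \<partial>lborel)"
    using A by (intro emeasure_density) auto
  also have "\<dots> \<le> (\<integral>\<^sup>+ x. indicator A x \<partial>lborel)"
    by (intro nn_integral_mono) (auto simp: phi_le1 split: split_indicator)
  also have "\<dots> = emeasure lborel A" using A by simp
  finally show ?thesis .
qed

interpretation PhiP: prob_space PhiD by (rule prob_space_normal_density) simp

lemma PhiD_sym: "emeasure PhiD {0<..} = emeasure PhiD {..<0}"
proof -
  have "emeasure PhiD {0<..} = (\<integral>\<^sup>+ x. ennreal (std_normal_density x) * indicator {0<..} x \<partial>lborel)"
    by (intro emeasure_density) auto
  also have "\<dots> = ennreal \<bar>- 1 :: real\<bar> * (\<integral>\<^sup>+ x. ennreal (std_normal_density (0 + - 1 * x)) * indicator {0<..} (0 + - 1 * x) \<partial>lborel)"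
    by (rule nn_integral_real_affine[where f="\<lambda>x. ennreal (std_normal_density x) * indicator {0<..} x"]) auto
  also have "\<dots> = (\<integral>\<^sup>+ x. ennreal (std_normal_density x) * indicator {..<0} x \<partial>lborel)"
    apply simp
    apply (intro nn_integral_cong)
    apply (auto simp: phi_even split: split_indicator)
    done
  also have "\<dots> = emeasure PhiD {..<0}"
    by (intro emeasure_density[symmetric]) auto
  finally show ?thesis .
qed

lemma Phi0: "measure PhiD {..0} = 1/2"
proof -
  have z: "measure PhiD {0} = 0"
  proof -
    have "emeasure PhiD {0::real} \<le> emeasure lborel {0::real}" by (rule PhiD_le) auto
    then have "emeasure PhiD {0} = 0" by simp
    then show ?thesis by (simp add: PhiP.emeasure_eq_measure)
  qed
  have s: "measure PhiD {0<..} = measure PhiD {..<0}"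
    using PhiD_sym by (simp add: PhiP.emeasure_eq_measure)
  have "measure PhiD {..0} = measure PhiD {..<0} + measure PhiD {0}"
  proof -
    have "{..0::real} = {..<0} \<union> {0}" by auto
    moreover have "measure PhiD ({..<0} \<union> {0::real}) = measure PhiD {..<0} + measure PhiD {0}"
      by (rule PhiP.finite_measure_Union) auto
    ultimately show ?thesis by simp
  qed
  moreover have "measure PhiD {..0} + measure PhiD {0<..} = 1"
  proof -
    have "{0<..} = space PhiD - {..0::real}" by auto
    moreover have "measure PhiD (space PhiD - {..0::real}) = 1 - measure PhiD {..0}"
      by (rule PhiP.prob_compl) auto
    ultimately show ?thesis by simp
  qed
  ultimately show ?thesis using z s by simp
qed

lemma PhiL: assumes "y \<le> 0" shows "measure PhiD {..y} \<ge> 1/2 + y"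
proof -
  have "emeasure PhiD {y<..0} \<le> emeasure lborel {y<..0}" by (rule PhiD_le) auto
  then have "ennreal (measure PhiD {y<..0}) \<le> ennreal (- y)"
    using assms by (simp add: PhiP.emeasure_eq_measure)
  then have le: "measure PhiD {y<..0} \<le> - y" using assms by (simp add: ennreal_le_iff)
  have "{..0} = {..y} \<union> {y<..0}" using assms by auto
  then have "measure PhiD {..0} = measure PhiD {..y} + measure PhiD {y<..0}"
    by (simp add: PhiP.finite_measure_Union ivl_disj_int_one)
  then show ?thesis using Phi0 le by simp
qed

definition KK :: "real \<Rightarrow> real \<Rightarrow> nat" where "KK z x = nat \<lfloor>x + z\<rfloor>"

lemma KK_meas[measurable]: "KK z \<in> measurable borel (count_space UNIV)"
  unfolding KK_def by measurable

lemma coord_indep: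
  fixes n :: nat
  assumes z: "z > 0" and n: "n \<ge> 1"
  shows "prob_space.indep_vars (PiM {..<n} (\<lambda>_. mu z)) (\<lambda>_. mu z) (\<lambda>i \<omega>. \<omega> i) {..<n}"
proof -
  let ?N = "PiM {..<n} (\<lambda>_. mu z)"
  have P: "prob_space ?N" by (intro prob_space_PiM mu_prob z)
  have "0 \<in> {..<n}" using n by simp
  then have ne: "{..<n} \<noteq> {}" by blast
  show ?thesis
  proof (subst prob_space.indep_vars_iff_distr_eq_PiM'[OF P ne])
    show "\<And>i. i \<in> {..<n} \<Longrightarrow> (\<lambda>\<omega>. \<omega> i) \<in> measurable ?N (mu z)" by simp
    have "distr ?N (PiM {..<n} (\<lambda>_. mu z)) (\<lambda>x. restrict x {..<n}) = distr ?N ?N (\<lambda>x. x)"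
      by (rule distr_cong) (auto simp: space_PiM)
    also have "\<dots> = ?N" by (rule distr_id)
    also have "\<dots> = PiM {..<n} (\<lambda>i. distr ?N (mu z) (\<lambda>\<omega>. \<omega> i))"
    proof (rule PiM_cong[OF refl])
      fix i assume "i \<in> {..<n}"
      then show "mu z = distr ?N (mu z) (\<lambda>\<omega>. \<omega> i)"
        using distr_PiM_component[of "{..<n}" "\<lambda>_. mu z" i] mu_prob[OF z] by simp
    qed
    finally show "distr ?N (PiM {..<n} (\<lambda>_. mu z)) (\<lambda>x. \<lambda>i\<in>{..<n}. x i) =
      PiM {..<n} (\<lambda>i. distr ?N (mu z) (\<lambda>\<omega>. \<omega> i))" .
  qed
qed


lemma gp_pk: "z > 0 \<Longrightarrow> gen_poisson_pmf z 0 k = pk z k"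
  by (cases k) (simp_all add: gp_abel abel_def pk_def)

lemma KK_real: "KK z (real j - z) = j"
  by (simp add: KK_def)

lemma coord_dist:
  fixes n :: nat
  assumes z: "z > 0" and i: "i < n"
  shows "measure (PiM {..<n} (\<lambda>_. mu z)) {\<omega>\<in>space (PiM {..<n} (\<lambda>_. mu z)). KK z (\<omega> i) = k} = gen_poisson_pmf z 0 k"
proof -
  let ?N = "PiM {..<n} (\<lambda>_. mu z)"
  have kb: "KK z -` {k} \<in> sets borel"
    using measurable_sets[OF KK_meas, of "{k}" z] by simp
  have "measure ?N {\<omega>\<in>space ?N. KK z (\<omega> i) = k} = measure (distr ?N (mu z) (\<lambda>\<omega>. \<omega> i)) (KK z -` {k})"
    using i kb by (subst measure_distr) (auto intro!: arg_cong[where f="measure ?N"])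
  also have "distr ?N (mu z) (\<lambda>\<omega>. \<omega> i) = mu z"
    using distr_PiM_component[of "{..<n}" "\<lambda>_. mu z" i] mu_prob[OF z] i by simp
  also have "measure (mu z) (KK z -` {k}) = measure (measure_pmf (poisson_pmf z)) ((\<lambda>j. real j - z) -` (KK z -` {k}))"
    unfolding mu_def using kb by (subst measure_distr) auto
  also have "(\<lambda>j. real j - z) -` (KK z -` {k}) = {k}" by (auto simp: KK_real)
  also have "measure (measure_pmf (poisson_pmf z)) {k} = pk z k"
    using z by (simp add: measure_pmf_single pk_def)
  finally show ?thesis using gp_pk[OF z] by simp
qed

lemma AE_KK:
  fixes n :: nat
  assumes z: "z > 0"
  shows "AE \<omega> in PiM {..<n} (\<lambda>_. mu z). \<forall>i\<in>{..<n}. \<omega> i = real (KK z (\<omega> i)) - z"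
proof -
  have "AE x in mu z. x = real (KK z x) - z"
    unfolding mu_def
  proof (subst AE_distr_iff)
    show "{x \<in> space borel. x = real (KK z x) - z} \<in> sets borel" by measurable
  qed (auto simp: KK_real)
  then have "AE \<omega> in PiM {..<n} (\<lambda>_. mu z). \<omega> i = real (KK z (\<omega> i)) - z" if "i \<in> {..<n}" for i
    using that by (intro AE_PiM_component mu_prob z) auto
  then show ?thesis by (intro eventually_ball_finite) auto
qed

lemma aux_lin: "(1::real)/2 - q - E \<le> A \<Longrightarrow> q \<le> (1/2 - E - A)/2 \<Longrightarrow> 0 < 1/2 - E - A \<Longrightarrow> False"
  by (simp add: field_simps)

lemma cdf_sum:
  fixes S :: "'a \<Rightarrow> nat"
  assumes P: "prob_space M" and evS: "\<And>j. {\<omega>\<in>space M. S \<omega> = j} \<in> sets M" and c: "c \<ge> 0"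
  shows "measure M {\<omega>\<in>space M. real (S \<omega>) \<le> c} = (\<Sum>j\<le>nat \<lfloor>c\<rfloor>. measure M {\<omega>\<in>space M. S \<omega> = j})"
proof -
  interpret prob_space M by (rule P)
  have "{\<omega>\<in>space M. real (S \<omega>) \<le> c} = (\<Union>j\<in>{..nat \<lfloor>c\<rfloor>}. {\<omega>\<in>space M. S \<omega> = j})"
    using c FF by auto
  then show ?thesis
    by (simp only:) (rule finite_measure_finite_Union, simp, use evS in blast, simp add: disjoint_family_on_def, blast)
qed

lemma E_bound:
  assumes z: "z > 0" and C: "C > 0" and I3: "I3 \<le> z * sqrt (3 * z + 1)" and n: "real n > 0"
  shows "C / sqrt (real n) * I3 / z powr (3/2) \<le> C / sqrt (real n) * (3 + 1 / z) powr (3/4)"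
proof -
  have zz: "z powr (3/2) = z * sqrt z"
  proof -
    have "z powr (3/2) = z powr (1 + 1/2)" by simp
    also have "\<dots> = z powr 1 * z powr (1/2)" by (rule powr_add)
    finally show ?thesis using z by (simp add: powr_half_sqrt)
  qed
  have "I3 / z powr (3/2) \<le> z * sqrt (3 * z + 1) / (z * sqrt z)"
    unfolding zz using I3 z by (intro divide_right_mono) auto
  also have "\<dots> = sqrt (3 + 1 / z)"
    using z by (simp add: real_sqrt_divide[symmetric] field_simps)
  also have "\<dots> = (3 + 1 / z) powr (1/2)"
    using z by (simp add: powr_half_sqrt add_pos_pos)
  also have "\<dots> \<le> (3 + 1 / z) powr (3/4)"
    using z by (intro powr_mono) auto
  finally have "I3 / z powr (3/2) \<le> (3 + 1 / z) powr (3/4)" .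
  then have "C / sqrt (real n) * (I3 / z powr (3/2)) \<le> C / sqrt (real n) * (3 + 1 / z) powr (3/4)"
    using C n by (intro mult_left_mono) auto
  then show ?thesis by simp
qed


lemma KK_meas_mu[measurable]: "KK z \<in> measurable (mu z) (count_space UNIV)"
  using KK_meas[of z] by (simp add: measurable_cong_sets[OF sets_mu refl])

lemma BE_apply:
  fixes n :: nat
  assumes z: "z > 0" and n: "n \<ge> 1" and BE: "berry_esseen_const C"
  shows "(\<Sum>j\<le>nat \<lfloor>real n * z\<rfloor>. gen_poisson_pmf (real n * z) 0 j) \<le> 1/2 + C / sqrt (real n) * (3 + 1 / z) powr (3/4)"
    and "1 - (\<Sum>j<nat \<lceil>real n * z\<rceil>. gen_poisson_pmf (real n * z) 0 j) \<le> 1/2 + C / sqrt (real n) * (3 + 1 / z) powr (3/4)"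
proof -
  let ?N = "PiM {..<n} (\<lambda>_. mu z)"
  have PN: "prob_space ?N" by (intro prob_space_PiM mu_prob z)
  interpret N: prob_space ?N by (rule PN)
  define S where "S \<omega> = (\<Sum>i<n. KK z (\<omega> i))" for \<omega>
  have measK: "(\<lambda>\<omega>. KK z (\<omega> i)) \<in> measurable ?N (count_space UNIV)" if "i < n" for i
  proof -
    have "(\<lambda>\<omega>. \<omega> i) \<in> measurable ?N (mu z)" using that by simp
    then show ?thesis using KK_meas_mu by (rule measurable_compose)
  qed
  have indK: "prob_space.indep_vars ?N (\<lambda>_. count_space UNIV) (\<lambda>i \<omega>. KK z (\<omega> i)) {..<n}"
    by (rule N.indep_vars_compose2[OF coord_indep[OF z n]]) simp
  have st: "(\<forall>j. measure ?N {\<omega> \<in> space ?N. (\<Sum>i<n. KK z (\<omega> i)) = j} = gen_poisson_pmf (real n * z) 0 j)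
    \<and> (\<forall>j. {\<omega> \<in> space ?N. (\<Sum>i<n. KK z (\<omega> i)) = j} \<in> sets ?N)
    \<and> gen_poisson_pmf z 0 sums 1
    \<and> gen_poisson_pmf (real n * z) 0 sums 1"
    by (rule main_setup[OF PN z _ _ n measK indK coord_dist[OF z]]) auto
  then have dS: "\<And>j. measure ?N {\<omega> \<in> space ?N. S \<omega> = j} = gen_poisson_pmf (real n * z) 0 j"
    and evS: "\<And>j. {\<omega> \<in> space ?N. S \<omega> = j} \<in> sets ?N"
    by (auto simp: S_def)
  note m = mu_moments[OF z] and a3 = mu_abs3[OF z]
  from BE have Cp: "C > 0" unfolding berry_esseen_const_def by blast
  from BE have BE2: "\<forall>\<mu> :: real measure. prob_space \<mu> \<and> sets \<mu> = sets borel \<and>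
       integrable \<mu> (\<lambda>x. \<bar>x\<bar> ^ 3) \<and> (\<integral>x. x \<partial>\<mu>) = 0 \<and> (\<integral>x. x ^ 2 \<partial>\<mu>) > 0 \<longrightarrow>
       (\<forall>n::nat. n \<ge> 1 \<longrightarrow> (\<forall>y::real.
          \<bar>measure (PiM {..<n} (\<lambda>_. \<mu>))
              {\<omega> \<in> space (PiM {..<n} (\<lambda>_. \<mu>)).
                 (\<Sum>i<n. \<omega> i) / sqrt (real n * (\<integral>x. x ^ 2 \<partial>\<mu>)) \<le> y}
           - measure (density lborel std_normal_density) {..y}\<bar>
          \<le> C / sqrt (real n) * (\<integral>x. \<bar>x\<bar> ^ 3 \<partial>\<mu>) / (\<integral>x. x ^ 2 \<partial>\<mu>) powr (3/2)))"
    unfolding berry_esseen_const_def by blast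
  have hyp: "prob_space (mu z) \<and> sets (mu z) = sets borel \<and>
       integrable (mu z) (\<lambda>x. \<bar>x\<bar> ^ 3) \<and> (\<integral>x. x \<partial>mu z) = 0 \<and> (\<integral>x. x ^ 2 \<partial>mu z) > 0"
    using mu_prob[OF z] m a3 z by simp
  have I2: "(\<integral>x. x ^ 2 \<partial>mu z) = z" using m by simp
  have BE3: "\<bar>measure ?N {\<omega> \<in> space ?N. (\<Sum>i<n. \<omega> i) / sqrt (real n * z) \<le> y}
           - measure PhiD {..y}\<bar> \<le> C / sqrt (real n) * (\<integral>x. \<bar>x\<bar> ^ 3 \<partial>mu z) / z powr (3/2)" for y
    using BE2[rule_format, OF hyp n, of y] unfolding I2 .
  have Eb: "C / sqrt (real n) * (\<integral>x. \<bar>x\<bar> ^ 3 \<partial>mu z) / z powr (3/2) \<le> C / sqrt (real n) * (3 + 1 / z) powr (3/4)"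
    by (rule E_bound[OF z Cp]) (use a3 n in auto)
  have BEy: "\<bar>measure ?N {\<omega> \<in> space ?N. (\<Sum>i<n. \<omega> i) / sqrt (real n * z) \<le> y}
           - measure PhiD {..y}\<bar> \<le> C / sqrt (real n) * (3 + 1 / z) powr (3/4)" for y
    using order_trans[OF BE3 Eb] .
  define s where "s = sqrt (real n * z)"
  have sp: "s > 0" using z n by (simp add: s_def)
  have seteq: "measure ?N {\<omega> \<in> space ?N. (\<Sum>i<n. \<omega> i) / sqrt (real n * z) \<le> y}
      = measure ?N {\<omega> \<in> space ?N. real (S \<omega>) \<le> real n * z + y * s}" for y
  proof (rule measure_eq_AE)
    show "AE \<omega> in ?N. (\<omega> \<in> {\<omega> \<in> space ?N. (\<Sum>i<n. \<omega> i) / sqrt (real n * z) \<le> y}) =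
        (\<omega> \<in> {\<omega> \<in> space ?N. real (S \<omega>) \<le> real n * z + y * s})"
      using AE_KK[OF z, of n]
    proof (rule eventually_mono)
      fix \<omega> assume h: "\<forall>i\<in>{..<n}. \<omega> i = real (KK z (\<omega> i)) - z"
      have "(\<Sum>i<n. \<omega> i) = (\<Sum>i<n. real (KK z (\<omega> i)) - z)" using h by simp
      also have "\<dots> = real (S \<omega>) - real n * z" by (simp add: S_def sum_subtractf)
      finally have "(\<Sum>i<n. \<omega> i) / s \<le> y \<longleftrightarrow> real (S \<omega>) \<le> real n * z + y * s"
        using sp by (simp add: pos_divide_le_eq diff_le_eq add.commute)
      then show "(\<omega> \<in> {\<omega> \<in> space ?N. (\<Sum>i<n. \<omega> i) / sqrt (real n * z) \<le> y}) =
        (\<omega> \<in> {\<omega> \<in> space ?N. real (S \<omega>) \<le> real n * z + y * s})" by (simp add: s_def)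
    qed
    have ci: "(\<lambda>\<omega>. \<omega> i) \<in> borel_measurable ?N" if "i \<in> {..<n}" for i
    proof -
      have "(\<lambda>\<omega>. \<omega> i) \<in> measurable ?N (mu z)" using that by simp
      then show ?thesis by (simp add: measurable_cong_sets[OF refl sets_mu])
    qed
    have "(\<lambda>\<omega>. (\<Sum>i<n. \<omega> i) / sqrt (real n * z)) \<in> borel_measurable ?N"
      by (intro borel_measurable_divide borel_measurable_sum ci borel_measurable_const)
    then show "{\<omega> \<in> space ?N. (\<Sum>i<n. \<omega> i) / sqrt (real n * z) \<le> y} \<in> sets ?N"
      by measurable
    have "(\<lambda>\<omega>. real (S \<omega>)) \<in> borel_measurable ?N"
      unfolding S_def by measurable
    then show "{\<omega> \<in> space ?N. real (S \<omega>) \<le> real n * z + y * s} \<in> sets ?N"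
      by measurable
  qed
  define E where "E = C / sqrt (real n) * (3 + 1 / z) powr (3/4)"
  have cdf: "measure ?N {\<omega> \<in> space ?N. real (S \<omega>) \<le> c} = (\<Sum>j\<le>nat \<lfloor>c\<rfloor>. gen_poisson_pmf (real n * z) 0 j)"
    if "c \<ge> 0" for c
    using cdf_sum[OF PN evS that] dS by simp
  show "(\<Sum>j\<le>nat \<lfloor>real n * z\<rfloor>. gen_poisson_pmf (real n * z) 0 j) \<le> 1/2 + C / sqrt (real n) * (3 + 1 / z) powr (3/4)"
  proof -
    have "(\<Sum>j\<le>nat \<lfloor>real n * z\<rfloor>. gen_poisson_pmf (real n * z) 0 j)
        = measure ?N {\<omega> \<in> space ?N. (\<Sum>i<n. \<omega> i) / sqrt (real n * z) \<le> 0}"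
      using cdf[of "real n * z"] seteq[of 0] z by simp
    then show ?thesis using BEy[of 0] Phi0 by simp
  qed
  show "1 - (\<Sum>j<nat \<lceil>real n * z\<rceil>. gen_poisson_pmf (real n * z) 0 j) \<le> 1/2 + C / sqrt (real n) * (3 + 1 / z) powr (3/4)"
  proof -
    define N0 where "N0 = nat \<lceil>real n * z\<rceil>"
    define A where "A = (\<Sum>j<N0. gen_poisson_pmf (real n * z) 0 j)"
    have nz: "real n * z > 0" using z n by simp
    have N0a: "real n * z \<le> real N0" and N0b: "real N0 < real n * z + 1"
      unfolding N0_def using nz by linarith+
    have N01: "N0 \<ge> 1" using N0a nz by (cases N0) auto
    define d where "d = real n * z - real N0 + 1"
    have dp: "d > 0" using N0b by (simp add: d_def)
    have key: "A \<ge> 1/2 - eta / s - E" if eta: "0 < eta" "eta \<le> d" for eta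
    proof -
      define y where "y = - eta / s"
      have ys: "real n * z + y * s = real n * z - eta" using sp by (simp add: y_def)
      have c0: "real n * z - eta \<ge> 0" using eta N01 by (simp add: d_def)
      have fl: "nat \<lfloor>real n * z - eta\<rfloor> = N0 - 1"
      proof -
        have "real (N0 - 1) \<le> real n * z - eta" using eta N01 by (simp add: d_def of_nat_diff)
        moreover have "real n * z - eta < real (N0 - 1) + 1" using eta N0a N01 by (simp add: of_nat_diff)
        ultimately have "\<lfloor>real n * z - eta\<rfloor> = int (N0 - 1)" by (simp add: floor_eq_iff)
        then show ?thesis by simp
      qed
      have "A = (\<Sum>j\<le>N0 - 1. gen_poisson_pmf (real n * z) 0 j)"
        unfolding A_def using N01 by (intro sum.cong) auto
      also have "\<dots> = measure ?N {\<omega> \<in> space ?N. (\<Sum>i<n. \<omega> i) / sqrt (real n * z) \<le> y}"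
        using cdf[OF c0] seteq[of y] ys fl by simp
      finally have "A \<ge> measure PhiD {..y} - E" using BEy[of y] unfolding E_def by linarith
      moreover have "measure PhiD {..y} \<ge> 1/2 + y" using sp eta by (intro PhiL) (simp add: y_def)
      ultimately show ?thesis by (simp add: y_def)
    qed
    have "A \<ge> 1/2 - E"
    proof (rule ccontr)
      assume "\<not> A \<ge> 1/2 - E"
      then have ep: "1/2 - E - A > 0" by simp
      define eta where "eta = min d (s * (1/2 - E - A) / 2)"
      have "eta > 0" using dp sp ep by (simp add: eta_def)
      moreover have "eta \<le> d" by (simp add: eta_def)
      ultimately have "A \<ge> 1/2 - eta / s - E" by (rule key)
      moreover have "eta / s \<le> (1/2 - E - A) / 2"
      proof -
        have "eta \<le> s * (1/2 - E - A) / 2" by (simp add: eta_def)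
        then have "eta \<le> (1/2 - E - A) / 2 * s" by (simp add: algebra_simps)
        then show ?thesis using sp by (simp add: pos_divide_le_eq)
      qed
      ultimately show False using ep aux_lin[of "eta / s" E A] by blast
    qed
    then show ?thesis by (simp add: A_def N0_def E_def)
  qed
qed

lemma tail_le2:
  fixes S :: "'a \<Rightarrow> nat"
  assumes P: "prob_space M" and evS: "\<And>j. {\<omega>\<in>space M. S \<omega> = j} \<in> sets M"
    and dS: "\<And>j. measure M {\<omega>\<in>space M. S \<omega> = j} = gen_poisson_pmf L a j"
    and L: "L > 0" and th: "th > 0" and a: "a \<ge> 0" and thL: "th \<le> L"
    and t0: "t0 \<ge> 0"
  shows "measure M {\<omega>\<in>space M. real (S \<omega>) \<le> t0} \<le> Rr L th a t0 * (\<Sum>j\<le>nat \<lfloor>t0\<rfloor>. gen_poisson_pmf th a j)"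
proof -
  interpret prob_space M by (rule P)
  define N where "N = nat \<lfloor>t0\<rfloor>"
  have ev: "{\<omega>\<in>space M. S \<omega> = j} \<in> events" for j using evS by simp
  have "{\<omega>\<in>space M. real (S \<omega>) \<le> t0} = (\<Union>j\<in>{..N}. {\<omega>\<in>space M. S \<omega> = j})"
    unfolding N_def using t0 FF by auto
  then have "prob {\<omega>\<in>space M. real (S \<omega>) \<le> t0} = (\<Sum>j\<le>N. prob {\<omega>\<in>space M. S \<omega> = j})"
    by (simp only:) (rule finite_measure_finite_Union, simp, use ev in blast, simp add: disjoint_family_on_def, blast)
  also have "\<dots> = (\<Sum>j\<le>N. Rr L th a (real j) * gen_poisson_pmf th a j)"
    using dS gp_ratio[OF L th a] by simp
  also have "\<dots> \<le> (\<Sum>j\<le>N. Rr L th a t0 * gen_poisson_pmf th a j)"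
  proof (rule sum_mono)
    fix j assume "j \<in> {..N}"
    then have "real j \<le> t0" unfolding N_def using t0 FF by auto
    then show "Rr L th a (real j) * gen_poisson_pmf th a j \<le> Rr L th a t0 * gen_poisson_pmf th a j"
      by (intro mult_right_mono Rr_mono_up) (use L th a thL gp_nonneg in auto)
  qed
  also have "\<dots> = Rr L th a t0 * (\<Sum>j\<le>N. gen_poisson_pmf th a j)" by (simp add: sum_distrib_left)
  finally show ?thesis by (simp add: N_def)
qed

lemma tail_ge2:
  fixes S :: "'a \<Rightarrow> nat"
  assumes P: "prob_space M" and evS: "\<And>j. {\<omega>\<in>space M. S \<omega> = j} \<in> sets M"
    and dS: "\<And>j. measure M {\<omega>\<in>space M. S \<omega> = j} = gen_poisson_pmf L a j"
    and L: "L > 0" and th: "th > 0" and a: "a \<ge> 0" and thL: "L \<le> th"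
    and sL: "gen_poisson_pmf L a sums 1"
    and sth: "summable (gen_poisson_pmf th a)"
    and t0: "t0 \<ge> 0"
  shows "measure M {\<omega>\<in>space M. real (S \<omega>) \<ge> t0} \<le> Rr L th a t0 * (\<Sum>j. gen_poisson_pmf th a (j + nat \<lceil>t0\<rceil>))"
proof -
  interpret prob_space M by (rule P)
  define N where "N = nat \<lceil>t0\<rceil>"
  have ev: "{\<omega>\<in>space M. S \<omega> = j} \<in> events" for j using evS by simp
  have NN: "real j \<ge> t0 \<longleftrightarrow> j \<ge> N" for j
    unfolding N_def using t0 by (simp add: nat_le_iff ceiling_le_iff)
  have "{\<omega>\<in>space M. real (S \<omega>) \<ge> t0} = space M - (\<Union>j\<in>{..<N}. {\<omega>\<in>space M. S \<omega> = j})"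
    using NN by auto
  moreover have "prob (\<Union>j\<in>{..<N}. {\<omega>\<in>space M. S \<omega> = j}) = (\<Sum>j<N. prob {\<omega>\<in>space M. S \<omega> = j})"
    by (rule finite_measure_finite_Union, simp, use ev in blast, simp add: disjoint_family_on_def, blast)
  moreover have "(\<Union>j\<in>{..<N}. {\<omega>\<in>space M. S \<omega> = j}) \<in> events" using ev by blast
  ultimately have "prob {\<omega>\<in>space M. real (S \<omega>) \<ge> t0} = 1 - (\<Sum>j<N. gen_poisson_pmf L a j)"
    using dS by (simp add: prob_compl)
  also have "\<dots> = (\<Sum>j. gen_poisson_pmf L a (j + N))"
    using suminf_split_initial_segment[of "gen_poisson_pmf L a" N] sL by (simp add: sums_iff)
  also have "\<dots> \<le> (\<Sum>j. Rr L th a t0 * gen_poisson_pmf th a (j + N))"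
  proof (rule suminf_le)
    fix j
    have "t0 \<le> real (j + N)" using NN[of "j + N"] by simp
    then show "gen_poisson_pmf L a (j + N) \<le> Rr L th a t0 * gen_poisson_pmf th a (j + N)"
      unfolding gp_ratio[OF L th a, of "j + N"]
      by (intro mult_right_mono Rr_mono_down) (use L th a thL t0 gp_nonneg in auto)
  next
    show "summable (\<lambda>j. gen_poisson_pmf L a (j + N))"
      using sL summable_iff_shift[of "gen_poisson_pmf L a" N] by (simp add: sums_iff)
    show "summable (\<lambda>j. Rr L th a t0 * gen_poisson_pmf th a (j + N))"
      using sth(1) summable_iff_shift[of "gen_poisson_pmf th a" N] by (intro summable_mult) simp
  qed
  also have "\<dots> = Rr L th a t0 * (\<Sum>j. gen_poisson_pmf th a (j + N))"
    using sth(1) summable_iff_shift[of "gen_poisson_pmf th a" N] by (intro suminf_mult) simp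
  finally show ?thesis by (simp add: N_def)
qed


lemma half_min: "U \<le> 1 \<Longrightarrow> U \<le> 1/2 + E \<Longrightarrow> U \<le> 1/2 + min (1/2) (E::real)"
  by (simp add: min_def)

lemma part5:
  fixes M :: "'a measure" and X :: "nat \<Rightarrow> 'a \<Rightarrow> nat"
    and lam alpha :: real and n :: nat
  assumes P: "prob_space M"
    and l: "lam > 0" and a0: "0 \<le> alpha" and a1: "alpha < 1" and n1: "n \<ge> 1"
    and meas: "\<And>i. i < n \<Longrightarrow> X i \<in> measurable M (count_space UNIV)"
    and ind: "prob_space.indep_vars M (\<lambda>_. count_space UNIV) X {..<n}"
    and dist: "\<And>i x. i < n \<Longrightarrow>
           measure M {\<omega> \<in> space M. X i \<omega> = x} = gen_poisson_pmf lam alpha x"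
  shows "alpha = 0 \<longrightarrow> (\<forall>C. berry_esseen_const C \<longrightarrow>
      (\<forall>z::real. z \<ge> lam \<longrightarrow>
         measure M {\<omega> \<in> space M. (\<Sum>i<n. real (X i \<omega>)) / real n \<ge> z}
         \<le> (1/2 + min (1/2) (C / sqrt (real n) * (3 + 1 / z) powr (3/4))) *
            (lam powr z * exp z / (z powr z * exp lam)) ^ n)
    \<and> (\<forall>z::real. 0 < z \<and> z \<le> lam \<longrightarrow>
         measure M {\<omega> \<in> space M. (\<Sum>i<n. real (X i \<omega>)) / real n \<le> z}
         \<le> (1/2 + min (1/2) (C / sqrt (real n) * (3 + 1 / z) powr (3/4))) *
            (lam powr z * exp z / (z powr z * exp lam)) ^ n))"
proof (rule impI, rule allI, rule impI, rule conjI)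
  assume a: "alpha = 0"
  fix C assume BE: "berry_esseen_const C"
  note st = main_setup[OF assms]
  define S where "S \<omega> = (\<Sum>i<n. X i \<omega>)" for \<omega>
  have dS: "\<And>j. measure M {\<omega>\<in>space M. S \<omega> = j} = gen_poisson_pmf (real n * lam) 0 j"
    and eS: "\<And>j. {\<omega>\<in>space M. S \<omega> = j} \<in> sets M"
    and sL: "gen_poisson_pmf (real n * lam) 0 sums 1"
    using st a by (auto simp: S_def)
  have np: "real n > 0" using n1 by simp
  have Lp: "real n * lam > 0" using np l by simp
  have setle: "{\<omega> \<in> space M. (\<Sum>i<n. real (X i \<omega>)) / real n \<le> z} = {\<omega>\<in>space M. real (S \<omega>) \<le> real n * z}" for z
    using np by (auto simp: S_def pos_divide_le_eq mult.commute simp flip: of_nat_sum)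
  have setge: "{\<omega> \<in> space M. (\<Sum>i<n. real (X i \<omega>)) / real n \<ge> z} = {\<omega>\<in>space M. real (S \<omega>) \<ge> real n * z}" for z
    using np by (auto simp: S_def pos_le_divide_eq mult.commute simp flip: of_nat_sum)
  have RR: "Rr (real n * lam) (real n * z) 0 (real n * z) = (lam powr z * exp z / (z powr z * exp lam)) ^ n"
    if z: "z > 0" for z
  proof -
    have "Rr (real n * lam) (real n * z) 0 (real n * z) = lam * (z + z * 0) / (z * (lam + z * 0)) *
      (((lam + z * 0) / (z + z * 0)) powr z * exp z / exp lam) ^ n"
      by (rule Rr_alg[OF l z z]) (use n1 in auto)
    also have "\<dots> = (lam powr z * exp z / (z powr z * exp lam)) ^ n"
      using z l by (simp add: powr_divide)
    finally show ?thesis .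
  qed
  have gpz: "gen_poisson_pmf (real n * z) 0 sums 1" "\<And>j. gen_poisson_pmf (real n * z) 0 j \<ge> 0"
    if z: "z > 0" for z
  proof -
    have p: "real n * z > 0" using np z by simp
    then have "gen_poisson_pmf (real n * z) 0 = pk (real n * z)" using gp_pk by (simp add: fun_eq_iff)
    then show "gen_poisson_pmf (real n * z) 0 sums 1" using pk_sums by simp
    show "\<And>j. gen_poisson_pmf (real n * z) 0 j \<ge> 0" using gp_nonneg[OF p] by simp
  qed
  show "\<forall>z::real. z \<ge> lam \<longrightarrow>
         measure M {\<omega> \<in> space M. (\<Sum>i<n. real (X i \<omega>)) / real n \<ge> z}
         \<le> (1/2 + min (1/2) (C / sqrt (real n) * (3 + 1 / z) powr (3/4))) *
            (lam powr z * exp z / (z powr z * exp lam)) ^ n"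
  proof (intro allI impI)
    fix z :: real assume zl: "z \<ge> lam"
    have z: "z > 0" using zl l by simp
    define N0 where "N0 = nat \<lceil>real n * z\<rceil>"
    define U where "U = (\<Sum>j. gen_poisson_pmf (real n * z) 0 (j + N0))"
    note g = gpz[OF z]
    have sm: "summable (gen_poisson_pmf (real n * z) 0)" using g by (simp add: sums_iff)
    have mt: "measure M {\<omega>\<in>space M. real (S \<omega>) \<ge> real n * z} \<le> Rr (real n * lam) (real n * z) 0 (real n * z) * U"
      unfolding U_def N0_def
      by (rule tail_ge2[OF P eS dS Lp _ _ _ sL sm]) (use np z zl in auto)
    have U1: "U = 1 - (\<Sum>j<N0. gen_poisson_pmf (real n * z) 0 j)"
      unfolding U_def using suminf_split_initial_segment[OF sm, of N0] g by (simp add: sums_iff)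
    have Ub1: "U \<le> 1" unfolding U1 using g by (simp add: sum_nonneg)
    have Ub2: "U \<le> 1/2 + C / sqrt (real n) * (3 + 1 / z) powr (3/4)"
      unfolding U1 N0_def by (rule BE_apply(2)[OF z n1 BE])
    have Ub: "U \<le> 1/2 + min (1/2) (C / sqrt (real n) * (3 + 1 / z) powr (3/4))"
      by (rule half_min[OF Ub1 Ub2])
    have R0: "Rr (real n * lam) (real n * z) 0 (real n * z) \<ge> 0"
      using Rr_nonneg[of "real n * lam" "real n * z" 0 "real n * z"] Lp np z by simp
    show "measure M {\<omega> \<in> space M. (\<Sum>i<n. real (X i \<omega>)) / real n \<ge> z}
         \<le> (1/2 + min (1/2) (C / sqrt (real n) * (3 + 1 / z) powr (3/4))) *
            (lam powr z * exp z / (z powr z * exp lam)) ^ n"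
      unfolding setge RR[OF z, symmetric]
      using order_trans[OF mt mult_left_mono[OF Ub R0]] by (simp add: mult.commute)
  qed
  show "\<forall>z::real. 0 < z \<and> z \<le> lam \<longrightarrow>
         measure M {\<omega> \<in> space M. (\<Sum>i<n. real (X i \<omega>)) / real n \<le> z}
         \<le> (1/2 + min (1/2) (C / sqrt (real n) * (3 + 1 / z) powr (3/4))) *
            (lam powr z * exp z / (z powr z * exp lam)) ^ n"
  proof (intro allI impI, elim conjE)
    fix z :: real assume z: "z > 0" and zl: "z \<le> lam"
    define U where "U = (\<Sum>j\<le>nat \<lfloor>real n * z\<rfloor>. gen_poisson_pmf (real n * z) 0 j)"
    note g = gpz[OF z]
    have sm: "summable (gen_poisson_pmf (real n * z) 0)" using g by (simp add: sums_iff)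
    have mt: "measure M {\<omega>\<in>space M. real (S \<omega>) \<le> real n * z} \<le> Rr (real n * lam) (real n * z) 0 (real n * z) * U"
      unfolding U_def
      by (rule tail_le2[OF P eS dS Lp]) (use np z zl in auto)
    have "U \<le> suminf (gen_poisson_pmf (real n * z) 0)"
      unfolding U_def by (rule sum_le_suminf[OF sm]) (use g in auto)
    then have Ub1: "U \<le> 1" using g by (simp add: sums_iff)
    have Ub2: "U \<le> 1/2 + C / sqrt (real n) * (3 + 1 / z) powr (3/4)"
      unfolding U_def by (rule BE_apply(1)[OF z n1 BE])
    have Ub: "U \<le> 1/2 + min (1/2) (C / sqrt (real n) * (3 + 1 / z) powr (3/4))"
      by (rule half_min[OF Ub1 Ub2])
    have R0: "Rr (real n * lam) (real n * z) 0 (real n * z) \<ge> 0"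
      using Rr_nonneg[of "real n * lam" "real n * z" 0 "real n * z"] Lp np z by simp
    show "measure M {\<omega> \<in> space M. (\<Sum>i<n. real (X i \<omega>)) / real n \<le> z}
         \<le> (1/2 + min (1/2) (C / sqrt (real n) * (3 + 1 / z) powr (3/4))) *
            (lam powr z * exp z / (z powr z * exp lam)) ^ n"
      unfolding setle RR[OF z, symmetric]
      using order_trans[OF mt mult_left_mono[OF Ub R0]] by (simp add: mult.commute)
  qed
qed

theorem theorem8:
  fixes M :: "'a measure" and X :: "nat \<Rightarrow> 'a \<Rightarrow> nat"
    and lam alpha :: real and n :: nat
  assumes "prob_space M"
    and "lam > 0" and "0 \<le> alpha" and "alpha < 1" and "n \<ge> 1"
    and "\<And>i. i < n \<Longrightarrow> X i \<in> measurable M (count_space UNIV)"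
    and "prob_space.indep_vars M (\<lambda>_. count_space UNIV) X {..<n}"
    and "\<And>i x. i < n \<Longrightarrow>
           measure M {\<omega> \<in> space M. X i \<omega> = x} = gen_poisson_pmf lam alpha x"
  shows
  "(\<forall>z::real. 0 < z \<and> z \<le> lam / (1 - alpha) \<longrightarrow>
      measure M {\<omega> \<in> space M. (\<Sum>i<n. real (X i \<omega>)) / real n \<le> z}
      \<le> lam / ((1 - alpha) * (lam + z * alpha)) *
         ((lam / z + alpha) powr z * exp ((1 - alpha) * z) / exp lam) ^ n)
 \<and> (\<forall>z::real. z \<ge> lam / (1 - alpha) \<longrightarrow>
      measure M {\<omega> \<in> space M. (\<Sum>i<n. real (X i \<omega>)) / real n \<ge> z}
      \<le> lam / ((1 - alpha) * (lam + z * alpha)) *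
         ((lam / z + alpha) powr z * exp ((1 - alpha) * z) / exp lam) ^ n)
 \<and> (\<forall>z::real. 0 < z \<and> z \<le> lam / (1 - alpha + alpha / (real n * lam)) \<longrightarrow>
      (let \<nu> = ((1 - alpha) * z + sqrt ((1 - alpha)^2 * z^2 + 4 * z * alpha / real n)) / 2 in
      measure M {\<omega> \<in> space M. (\<Sum>i<n. real (X i \<omega>)) / real n \<le> z}
      \<le> lam * (\<nu> + z * alpha) / (\<nu> * (lam + z * alpha)) *
         (((lam + z * alpha) / (\<nu> + z * alpha)) powr z * exp \<nu> / exp lam) ^ n))
 \<and> (\<forall>z::real. z \<ge> lam / (1 - alpha + alpha / (real n * lam)) \<longrightarrow>
      (let \<nu> = ((1 - alpha) * z + sqrt ((1 - alpha)^2 * z^2 + 4 * z * alpha / real n)) / 2 in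
      measure M {\<omega> \<in> space M. (\<Sum>i<n. real (X i \<omega>)) / real n \<ge> z}
      \<le> lam * (\<nu> + z * alpha) / (\<nu> * (lam + z * alpha)) *
         (((lam + z * alpha) / (\<nu> + z * alpha)) powr z * exp \<nu> / exp lam) ^ n))
 \<and> (alpha = 0 \<longrightarrow> (\<forall>C. berry_esseen_const C \<longrightarrow>
      (\<forall>z::real. z \<ge> lam \<longrightarrow>
         measure M {\<omega> \<in> space M. (\<Sum>i<n. real (X i \<omega>)) / real n \<ge> z}
         \<le> (1/2 + min (1/2) (C / sqrt (real n) * (3 + 1 / z) powr (3/4))) *
            (lam powr z * exp z / (z powr z * exp lam)) ^ n)
    \<and> (\<forall>z::real. 0 < z \<and> z \<le> lam \<longrightarrow>
         measure M {\<omega> \<in> space M. (\<Sum>i<n. real (X i \<omega>)) / real n \<le> z}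
         \<le> (1/2 + min (1/2) (C / sqrt (real n) * (3 + 1 / z) powr (3/4))) *
            (lam powr z * exp z / (z powr z * exp lam)) ^ n)))"
  using part1234[OF assms] part5[OF assms] by blast

end
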